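(* There exist a continuous map $f : \mathbb{R}^2 \to \mathbb{R}^2$ and a fixed point $p$ of $f$ such that $p$ has a neighborhood containing no periodic point of $f$ other than $p$, $\{p\}$ is not an isolated invariant set, and $i(f^n,p) = 2^n - 1$ for every $n \ge 1$ (in particular the sequence $\{i(f^n,p)\}_{n\ge1}$ is unbounded).
   Context: $i(g,p)$ is the fixed point index. $\{p\}$ is an isolated invariant set if there is a compact $N$ with $\{p\} = \mathrm{Inv}(f,N) \subset \mathrm{int}(N)$, where $\mathrm{Inv}(f,N)$ is the set of $x \in N$ admitting a sequence $(x_n)_{n\in\mathbb{Z}}\subset N$ with $x_0=x$, $f(x_n)=x_{n+1}$. *)

theory Defs
  imports "HOL-Analysis.Analysis"
begin

text \<open>The plane R^2 is modelled as the complex numbers.\<close>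

definition loop_winding :: "(real \<Rightarrow> complex) \<Rightarrow> int" where
  "loop_winding g = (THE k::int. \<exists>\<theta>::real \<Rightarrow> real. continuous_on {0..1} \<theta> \<and>
      (\<forall>t\<in>{0..1}. g t = complex_of_real (cmod (g t)) * cis (\<theta> t)) \<and>
      \<theta> 1 - \<theta> 0 = 2 * pi * real_of_int k)"

definition fixed_point_index :: "(complex \<Rightarrow> complex) \<Rightarrow> complex \<Rightarrow> int" where
  "fixed_point_index f p = (THE k::int. \<exists>\<epsilon>>0. \<forall>r. 0 < r \<and> r < \<epsilon> \<longrightarrow>
      loop_winding (\<lambda>t. (p + complex_of_real r * cis (2 * pi * t))
                         - f (p + complex_of_real r * cis (2 * pi * t))) = k)"

definition Inv :: "('a \<Rightarrow> 'a) \<Rightarrow> 'a set \<Rightarrow> 'a set" where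
  "Inv f N = {x \<in> N. \<exists>xs::int \<Rightarrow> 'a. xs 0 = x \<and> (\<forall>n. xs n \<in> N \<and> f (xs n) = xs (n + 1))}"

definition isolated_invariant_set :: "('a::topological_space \<Rightarrow> 'a) \<Rightarrow> 'a set \<Rightarrow> bool" where
  "isolated_invariant_set f S \<longleftrightarrow> (\<exists>N. compact N \<and> S = Inv f N \<and> S \<subseteq> interior N)"

definition periodic_point :: "('a \<Rightarrow> 'a) \<Rightarrow> 'a \<Rightarrow> bool" where
  "periodic_point f x \<longleftrightarrow> (\<exists>n\<ge>1. (f ^^ n) x = x)"

end

theory Submission
  imports Defs
begin

definition lift_on :: "(real \<Rightarrow> complex) \<Rightarrow> (real \<Rightarrow> real) \<Rightarrow> real \<Rightarrow> real \<Rightarrow> bool" where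
  "lift_on v \<theta> a b \<longleftrightarrow> continuous_on {a..b} \<theta> \<and>
     (\<forall>t\<in>{a..b}. v t = complex_of_real (cmod (v t)) * cis (\<theta> t))"

lemma cis_eq_int:
  assumes "cis x = cis y" shows "\<exists>m::int. x = y + 2 * pi * m"
proof -
  have "sin x = sin y \<and> cos x = cos y" using assms
    by (metis cis.sel(1) cis.sel(2))
  then show ?thesis using sin_cos_eq_iff by blast
qed

lemma lift_glue:
  assumes l1: "lift_on v \<theta>1 a b" and l2: "lift_on v \<theta>2 b c" and "a \<le> b" "b \<le> c" and nz: "v b \<noteq> 0"
  shows "\<exists>\<theta>. lift_on v \<theta> a c \<and> \<theta> c - \<theta> a = (\<theta>1 b - \<theta>1 a) + (\<theta>2 c - \<theta>2 b)"
proof -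
  have "v b = complex_of_real (cmod (v b)) * cis (\<theta>1 b)" using l1 assms unfolding lift_on_def by auto
  moreover have "v b = complex_of_real (cmod (v b)) * cis (\<theta>2 b)" using l2 assms unfolding lift_on_def by auto
  ultimately have "cis (\<theta>1 b) = cis (\<theta>2 b)" using nz by (metis mult_cancel_left of_real_eq_0_iff norm_eq_zero)
  then obtain m :: int where m: "\<theta>1 b = \<theta>2 b + 2 * pi * m" using cis_eq_int by blast
  define \<theta> where "\<theta> t = (if t \<le> b then \<theta>1 t else \<theta>2 t + 2 * pi * m)" for t
  have c1: "continuous_on {x \<in> {a..c}. x \<le> b} \<theta>1"
    using l1 unfolding lift_on_def by (rule conjE) (erule continuous_on_subset, auto)
  have c2: "continuous_on {x \<in> {a..c}. b \<le> x} (\<lambda>t. \<theta>2 t + 2 * pi * m)"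
    using l2 unfolding lift_on_def by (intro continuous_intros) (auto elim: continuous_on_subset)
  have "continuous_on {a..c} \<theta>"
    unfolding \<theta>_def
    by (rule continuous_on_cases_le[OF c1 c2]) (auto intro: continuous_intros simp: m)
  moreover have "\<forall>t\<in>{a..c}. v t = complex_of_real (cmod (v t)) * cis (\<theta> t)"
  proof
    fix t assume t: "t \<in> {a..c}"
    show "v t = complex_of_real (cmod (v t)) * cis (\<theta> t)"
    proof (cases "t \<le> b")
      case True then show ?thesis using l1 t unfolding lift_on_def \<theta>_def by auto
    next
      case False
      have "cis (\<theta>2 t + 2 * pi * m) = cis (\<theta>2 t)"
        by (simp add: cis_mult[symmetric])
      then show ?thesis using l2 t False unfolding lift_on_def \<theta>_def by auto
    qed
  qed
  moreover have "\<theta> c - \<theta> a = (\<theta>1 b - \<theta>1 a) + (\<theta>2 c - \<theta>2 b)"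
    using assms m unfolding \<theta>_def by auto
  ultimately show ?thesis unfolding lift_on_def by blast
qed

lemma lift_Arg:
  assumes "continuous_on {a..b} v" and "\<And>t. t \<in> {a..b} \<Longrightarrow> v t \<notin> \<real>\<^sub>\<le>\<^sub>0"
  shows "lift_on v (\<lambda>t. Arg (v t)) a b"
proof -
  have "continuous_on {a..b} (\<lambda>t. Arg (v t))"
    by (intro continuous_intros assms)
  moreover have "v t = complex_of_real (cmod (v t)) * cis (Arg (v t))" for t
    by (metis rcis_cmod_Arg rcis_def)
  ultimately show ?thesis unfolding lift_on_def by auto
qed

lemma lift_unique:
  assumes l1: "lift_on v \<theta>1 a b" and l2: "lift_on v \<theta>2 a b" and "a \<le> b"
    and nz: "\<And>t. t \<in> {a..b} \<Longrightarrow> v t \<noteq> 0"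
  shows "\<theta>1 b - \<theta>1 a = \<theta>2 b - \<theta>2 a"
proof -
  define h where "h t = (\<theta>1 t - \<theta>2 t) / (2 * pi)" for t
  have hint: "h t \<in> \<int>" if "t \<in> {a..b}" for t
  proof -
    have "v t = complex_of_real (cmod (v t)) * cis (\<theta>1 t)" "v t = complex_of_real (cmod (v t)) * cis (\<theta>2 t)"
      using l1 l2 that unfolding lift_on_def by auto
    then have "cis (\<theta>1 t) = cis (\<theta>2 t)" using nz[OF that] by (metis mult_cancel_left of_real_eq_0_iff norm_eq_zero)
    then obtain m :: int where "\<theta>1 t = \<theta>2 t + 2 * pi * m" using cis_eq_int by blast
    then have "h t = m" unfolding h_def by (simp add: field_simps)
    then show ?thesis by simp
  qed
  have "continuous_on {a..b} h" unfolding h_def using l1 l2 unfolding lift_on_def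
    by (intro continuous_intros) auto
  then have "h constant_on {a..b}"
  proof (rule continuous_discrete_range_constant[OF connected_Icc])
    fix x assume x: "x \<in> {a..b}"
    show "\<exists>e>0. \<forall>y. y \<in> {a..b} \<and> h y \<noteq> h x \<longrightarrow> e \<le> norm (h y - h x)"
    proof (intro exI[of _ 1] conjI allI impI)
      fix y assume y: "y \<in> {a..b} \<and> h y \<noteq> h x"
      then have "h y - h x \<in> \<int>" using hint x by auto
      then obtain k :: int where "h y - h x = k" by (metis Ints_cases)
      with y have "k \<noteq> 0" by auto
      then have "1 \<le> \<bar>real_of_int k\<bar>" by linarith
      then show "1 \<le> norm (h y - h x)" using \<open>h y - h x = k\<close> by simp
    qed simp
  qed
  then have "h a = h b" using assms unfolding constant_on_def by auto
  then show ?thesis unfolding h_def by (simp add: field_simps)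
qed

lemma lift_endpoint:
  assumes "lift_on v \<psi> a b" "t \<in> {a..b}" "v t \<noteq> 0"
  shows "\<exists>m::int. \<psi> t = Arg (v t) + 2 * pi * m"
proof -
  have "v t = complex_of_real (cmod (v t)) * cis (\<psi> t)" using assms unfolding lift_on_def by auto
  moreover have "v t = complex_of_real (cmod (v t)) * cis (Arg (v t))"
    by (metis rcis_cmod_Arg rcis_def)
  ultimately have "cis (\<psi> t) = cis (Arg (v t))" using assms(3)
    by (metis mult_cancel_left of_real_eq_0_iff norm_eq_zero)
  then show ?thesis using cis_eq_int by blast
qed

lemma int_between_0:
  fixes m :: int assumes "-3*pi/2 < 2*pi*m" "2*pi*m < 3*pi/2" shows "m = 0"
proof -
  have "pi * (-3/4) < pi * real_of_int m" "pi * real_of_int m < pi * (3/4)" using assms by simp_all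
  then have "-3/4 < real_of_int m" "real_of_int m < 3/4" using pi_gt_zero mult_less_cancel_left_pos by blast+
  then show ?thesis by linarith
qed

lemma int_between_1:
  fixes m :: int assumes "pi/2 < 2*pi*m" "2*pi*m < 7*pi/2" shows "m = 1"
proof -
  have "pi * (1/4) < pi * real_of_int m" "pi * real_of_int m < pi * (7/4)" using assms by simp_all
  then have "1/4 < real_of_int m" "real_of_int m < 7/4" using pi_gt_zero mult_less_cancel_left_pos by blast+
  then show ?thesis by linarith
qed

lemma Arg_Im_pos: "0 < Im z \<Longrightarrow> 0 < Arg z \<and> Arg z < pi"
  using Arg_lt_pi by blast

lemma Arg_Im_neg: "Im z < 0 \<Longrightarrow> -pi < Arg z \<and> Arg z < 0"
  using Arg_less_0[of z] Arg_bounded[of z] by linarith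

lemma cross_lift:
  assumes A: "1 < A" and ab: "\<alpha> \<le> \<beta>" and cont: "continuous_on {\<alpha>..\<beta>} \<phi>"
    and v: "\<And>t. t \<in> {\<alpha>..\<beta>} \<Longrightarrow> v t = 1 - complex_of_real A * cis (\<phi> t)"
  shows "lift_on v (\<lambda>t. \<phi> t + pi + Arg (1 - cis (- \<phi> t) / complex_of_real A)) \<alpha> \<beta>"
    and "\<And>t. \<bar>Arg (1 - cis (- \<phi> t) / complex_of_real A)\<bar> < pi/2"
proof -
  define q where "q t = 1 - cis (- \<phi> t) / complex_of_real A" for t
  have Req: "Re (q t) > 0" for t
  proof -
    have "Re (cis (- \<phi> t) / complex_of_real A) = cos (\<phi> t) / A" using A by (simp add: Re_divide_of_real)
    moreover have "cos (\<phi> t) / A \<le> 1 / A" using A by (intro divide_right_mono) auto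
    moreover have "1 / A < 1" using A by simp
    ultimately show ?thesis unfolding q_def by simp
  qed
  show "\<bar>Arg (1 - cis (- \<phi> t) / complex_of_real A)\<bar> < pi/2" for t
    using Req[of t] Arg_Re_pos unfolding q_def by blast
  have qnot: "q t \<notin> \<real>\<^sub>\<le>\<^sub>0" for t using Req[of t] by (auto simp: complex_nonpos_Reals_iff)
  have cq: "continuous_on {\<alpha>..\<beta>} (\<lambda>t. Arg (q t))"
    unfolding q_def using qnot[unfolded q_def] cont A
    by (intro continuous_intros) auto
  have c: "continuous_on {\<alpha>..\<beta>} (\<lambda>t. \<phi> t + pi + Arg (q t))"
    by (intro continuous_intros cont cq)
  have eq: "v t = complex_of_real (cmod (v t)) * cis (\<phi> t + pi + Arg (q t))" if t: "t \<in> {\<alpha>..\<beta>}" for t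
  proof -
    have Anz: "complex_of_real A \<noteq> 0" using A by simp
    have v1: "v t = - complex_of_real A * cis (\<phi> t) * q t"
      unfolding v[OF t] q_def using Anz
      by (simp add: field_simps cis_mult)
    have qq: "q t = complex_of_real (cmod (q t)) * cis (Arg (q t))"
      by (metis rcis_cmod_Arg rcis_def)
    have cv: "cmod (v t) = A * cmod (q t)" using A unfolding v1 by (simp add: norm_mult)
    have "v t = complex_of_real A * complex_of_real (cmod (q t)) * (- cis (\<phi> t) * cis (Arg (q t)))"
      using v1 qq by (metis (no_types, lifting) mult.assoc mult.left_commute mult_minus_left)
    also have "- cis (\<phi> t) * cis (Arg (q t)) = cis (\<phi> t + pi + Arg (q t))"
      by (simp add: cis_mult[symmetric] add.assoc)
    finally show ?thesis using cv by simp
  qed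
  show "lift_on v (\<lambda>t. \<phi> t + pi + Arg (1 - cis (- \<phi> t) / complex_of_real A)) \<alpha> \<beta>"
    unfolding lift_on_def using c eq unfolding q_def by auto
qed

lemma cross_pos:
  assumes A: "1 < A" and ab: "\<alpha> \<le> \<beta>" and cont: "continuous_on {\<alpha>..\<beta>} \<phi>"
    and v: "\<And>t. t \<in> {\<alpha>..\<beta>} \<Longrightarrow> v t = 1 - complex_of_real A * cis (\<phi> t)"
    and a1: "-pi < \<phi> \<alpha>" and a2: "\<phi> \<alpha> < 0" and b1: "0 < \<phi> \<beta>" and b2: "\<phi> \<beta> < pi"
  shows "\<exists>\<psi>. lift_on v \<psi> \<alpha> \<beta> \<and> \<psi> \<beta> - \<psi> \<alpha> = Arg (v \<beta>) - Arg (v \<alpha>) + 2 * pi * 1"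
proof -
  define \<psi> where "\<psi> t = \<phi> t + pi + Arg (1 - cis (- \<phi> t) / complex_of_real A)" for t
  have L: "lift_on v \<psi> \<alpha> \<beta>" unfolding \<psi>_def by (rule cross_lift(1)[OF A ab cont v])
  have B: "\<bar>\<psi> t - (\<phi> t + pi)\<bar> < pi/2" for t unfolding \<psi>_def using cross_lift(2)[OF A ab cont v] by simp
  have Imv: "Im (v t) = - A * sin (\<phi> t)" if "t \<in> {\<alpha>..\<beta>}" for t using v[OF that] by simp
  have sa: "sin (\<phi> \<alpha>) < 0" using a1 a2 sin_gt_zero[of "- \<phi> \<alpha>"] by simp
  have sb: "sin (\<phi> \<beta>) > 0" using b1 b2 sin_gt_zero by simp
  have ia: "Im (v \<alpha>) > 0" using Imv[of \<alpha>] ab sa A mult_pos_neg[of A "sin (\<phi> \<alpha>)"] by simp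
  have ib: "Im (v \<beta>) < 0" using Imv[of \<beta>] ab sb A mult_pos_pos[of A "sin (\<phi> \<beta>)"] by simp
  obtain ma :: int where ma: "\<psi> \<alpha> = Arg (v \<alpha>) + 2 * pi * ma"
    using lift_endpoint[OF L, of \<alpha>] ab ia by (metis atLeastAtMost_iff order_refl zero_complex.simps(2) less_irrefl)
  obtain mb :: int where mb: "\<psi> \<beta> = Arg (v \<beta>) + 2 * pi * mb"
    using lift_endpoint[OF L, of \<beta>] ab ib by (metis atLeastAtMost_iff order_refl zero_complex.simps(2) less_irrefl)
  have "ma = 0" using ma B[of \<alpha>] Arg_Im_pos[OF ia] a1 a2 by (intro int_between_0) linarith+
  moreover have "mb = 1" using mb B[of \<beta>] Arg_Im_neg[OF ib] b1 b2 by (intro int_between_1) linarith+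
  ultimately show ?thesis using L ma mb by (intro exI[of _ \<psi>]) auto
qed

lemma cross_neg:
  assumes A: "1 < A" and ab: "\<alpha> \<le> \<beta>" and cont: "continuous_on {\<alpha>..\<beta>} \<phi>"
    and v: "\<And>t. t \<in> {\<alpha>..\<beta>} \<Longrightarrow> v t = 1 - complex_of_real A * cis (\<phi> t)"
    and a1: "0 < \<phi> \<alpha>" and a2: "\<phi> \<alpha> < pi" and b1: "-pi < \<phi> \<beta>" and b2: "\<phi> \<beta> < 0"
  shows "\<exists>\<psi>. lift_on v \<psi> \<alpha> \<beta> \<and> \<psi> \<beta> - \<psi> \<alpha> = Arg (v \<beta>) - Arg (v \<alpha>) + 2 * pi * (-1)"
proof -
  define \<psi> where "\<psi> t = \<phi> t + pi + Arg (1 - cis (- \<phi> t) / complex_of_real A)" for t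
  have L: "lift_on v \<psi> \<alpha> \<beta>" unfolding \<psi>_def by (rule cross_lift(1)[OF A ab cont v])
  have B: "\<bar>\<psi> t - (\<phi> t + pi)\<bar> < pi/2" for t unfolding \<psi>_def using cross_lift(2)[OF A ab cont v] by simp
  have Imv: "Im (v t) = - A * sin (\<phi> t)" if "t \<in> {\<alpha>..\<beta>}" for t using v[OF that] by simp
  have sb: "sin (\<phi> \<beta>) < 0" using b1 b2 sin_gt_zero[of "- \<phi> \<beta>"] by simp
  have sa: "sin (\<phi> \<alpha>) > 0" using a1 a2 sin_gt_zero by simp
  have ib: "Im (v \<beta>) > 0" using Imv[of \<beta>] ab sb A mult_pos_neg[of A "sin (\<phi> \<beta>)"] by simp
  have ia: "Im (v \<alpha>) < 0" using Imv[of \<alpha>] ab sa A mult_pos_pos[of A "sin (\<phi> \<alpha>)"] by simp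
  obtain ma :: int where ma: "\<psi> \<alpha> = Arg (v \<alpha>) + 2 * pi * ma"
    using lift_endpoint[OF L, of \<alpha>] ab ia by (metis atLeastAtMost_iff order_refl zero_complex.simps(2) less_irrefl)
  obtain mb :: int where mb: "\<psi> \<beta> = Arg (v \<beta>) + 2 * pi * mb"
    using lift_endpoint[OF L, of \<beta>] ab ib by (metis atLeastAtMost_iff order_refl zero_complex.simps(2) less_irrefl)
  have "mb = 0" using mb B[of \<beta>] Arg_Im_pos[OF ib] b1 b2 by (intro int_between_0) linarith+
  moreover have "ma = 1" using ma B[of \<alpha>] Arg_Im_neg[OF ia] a1 a2 by (intro int_between_1) linarith+
  ultimately show ?thesis using L ma mb by (intro exI[of _ \<psi>]) auto
qed

lemma glue_pieces:
  fixes P :: "(real \<times> real) set" and \<epsilon> :: "real \<times> real \<Rightarrow> int"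
  assumes "finite P"
    and "\<forall>p\<in>P. a < fst p \<and> fst p < snd p \<and> snd p < b"
    and "\<forall>p\<in>P. \<forall>q\<in>P. p \<noteq> q \<longrightarrow> snd p < fst q \<or> snd q < fst p"
    and "continuous_on {a..b} v"
    and "\<forall>t\<in>{a..b}. (\<forall>p\<in>P. t \<notin> {fst p..snd p}) \<longrightarrow> v t \<notin> \<real>\<^sub>\<le>\<^sub>0"
    and "\<forall>p\<in>P. v (fst p) \<notin> \<real>\<^sub>\<le>\<^sub>0 \<and> v (snd p) \<notin> \<real>\<^sub>\<le>\<^sub>0"
    and "\<forall>p\<in>P. \<exists>\<psi>. lift_on v \<psi> (fst p) (snd p) \<and>
            \<psi> (snd p) - \<psi> (fst p) = Arg (v (snd p)) - Arg (v (fst p)) + 2 * pi * \<epsilon> p"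
    and "a \<le> b"
  shows "\<exists>\<theta>. lift_on v \<theta> a b \<and> \<theta> b - \<theta> a = Arg (v b) - Arg (v a) + 2 * pi * (\<Sum>p\<in>P. \<epsilon> p)"
  using assms
proof (induction "card P" arbitrary: P a rule: less_induct)
  case less
  show ?case
  proof (cases "P = {}")
    case True
    have "lift_on v (\<lambda>t. Arg (v t)) a b"
      using less.prems True by (intro lift_Arg) auto
    then show ?thesis using True by auto
  next
    case False
    define m where "m = Min (fst ` P)"
    have "m \<in> fst ` P" unfolding m_def using False less.prems(1) by auto
    then obtain p0 where p0: "p0 \<in> P" "fst p0 = m" by auto
    have minp: "\<forall>p\<in>P. fst p0 \<le> fst p" using p0 less.prems(1) unfolding m_def by auto
    have p0b: "a < fst p0" "fst p0 < snd p0" "snd p0 < b" using less.prems(2) p0 by auto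
    have ncv: "v (fst p0) \<notin> \<real>\<^sub>\<le>\<^sub>0" "v (snd p0) \<notin> \<real>\<^sub>\<le>\<^sub>0" using less.prems(6) p0 by auto
    have l1: "lift_on v (\<lambda>t. Arg (v t)) a (fst p0)"
    proof (rule lift_Arg)
      show "continuous_on {a..fst p0} v" using less.prems(4) p0b by (auto elim: continuous_on_subset)
      fix t assume t: "t \<in> {a..fst p0}"
      show "v t \<notin> \<real>\<^sub>\<le>\<^sub>0"
      proof (cases "t = fst p0")
        case True then show ?thesis using ncv by simp
      next
        case False
        then have "t < fst p0" using t by auto
        then have "\<forall>p\<in>P. t \<notin> {fst p..snd p}" using minp by fastforce
        then show ?thesis using less.prems(5) t p0b by auto
      qed
    qed
    obtain \<psi> where l2: "lift_on v \<psi> (fst p0) (snd p0)"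
      and e2: "\<psi> (snd p0) - \<psi> (fst p0) = Arg (v (snd p0)) - Arg (v (fst p0)) + 2 * pi * \<epsilon> p0"
      using less.prems(7) p0 by blast
    define P' where "P' = P - {p0}"
    have cardP': "card P' < card P" unfolding P'_def using p0 less.prems(1) card_gt_0_iff by (metis card_Diff1_less)
    have after: "\<forall>p\<in>P'. snd p0 < fst p"
    proof
      fix p assume p: "p \<in> P'"
      then have "p \<in> P" "p \<noteq> p0" unfolding P'_def by auto
      then have "snd p < fst p0 \<or> snd p0 < fst p" using less.prems(3) p0 by blast
      moreover have "fst p0 \<le> fst p" "fst p < snd p" using minp less.prems(2) \<open>p \<in> P\<close> by auto
      ultimately show "snd p0 < fst p" by linarith
    qed
    have "\<exists>\<theta>. lift_on v \<theta> (snd p0) b \<and> \<theta> b - \<theta> (snd p0) = Arg (v b) - Arg (v (snd p0)) + 2 * pi * (\<Sum>p\<in>P'. \<epsilon> p)"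
    proof (rule less.hyps[OF cardP'])
      show "finite P'" using less.prems(1) unfolding P'_def by simp
      show "\<forall>p\<in>P'. snd p0 < fst p \<and> fst p < snd p \<and> snd p < b" using after less.prems(2) unfolding P'_def by auto
      show "\<forall>p\<in>P'. \<forall>q\<in>P'. p \<noteq> q \<longrightarrow> snd p < fst q \<or> snd q < fst p" using less.prems(3) unfolding P'_def by auto
      show "continuous_on {snd p0..b} v" using less.prems(4) p0b by (auto elim: continuous_on_subset)
      show "\<forall>t\<in>{snd p0..b}. (\<forall>p\<in>P'. t \<notin> {fst p..snd p}) \<longrightarrow> v t \<notin> \<real>\<^sub>\<le>\<^sub>0"
      proof (intro ballI impI)
        fix t assume t: "t \<in> {snd p0..b}" and np: "\<forall>p\<in>P'. t \<notin> {fst p..snd p}"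
        show "v t \<notin> \<real>\<^sub>\<le>\<^sub>0"
        proof (cases "t = snd p0")
          case True then show ?thesis using ncv by simp
        next
          case False
          then have "t \<notin> {fst p0..snd p0}" using t by auto
          then have "\<forall>p\<in>P. t \<notin> {fst p..snd p}" using np unfolding P'_def by auto
          then show ?thesis using less.prems(5) t p0b by auto
        qed
      qed
      show "\<forall>p\<in>P'. v (fst p) \<notin> \<real>\<^sub>\<le>\<^sub>0 \<and> v (snd p) \<notin> \<real>\<^sub>\<le>\<^sub>0" using less.prems(6) unfolding P'_def by auto
      show "\<forall>p\<in>P'. \<exists>\<psi>. lift_on v \<psi> (fst p) (snd p) \<and>
            \<psi> (snd p) - \<psi> (fst p) = Arg (v (snd p)) - Arg (v (fst p)) + 2 * pi * \<epsilon> p"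
        using less.prems(7) unfolding P'_def by auto
      show "snd p0 \<le> b" using p0b by simp
    qed
    then obtain \<theta>3 where l3: "lift_on v \<theta>3 (snd p0) b"
      and e3: "\<theta>3 b - \<theta>3 (snd p0) = Arg (v b) - Arg (v (snd p0)) + 2 * pi * (\<Sum>p\<in>P'. \<epsilon> p)" by blast
    have nz: "v (fst p0) \<noteq> 0" "v (snd p0) \<noteq> 0" using ncv by auto
    obtain \<theta>12 where l12: "lift_on v \<theta>12 a (snd p0)"
      and e12: "\<theta>12 (snd p0) - \<theta>12 a = (Arg (v (fst p0)) - Arg (v a)) + (\<psi> (snd p0) - \<psi> (fst p0))"
      using lift_glue[OF l1 l2 _ _ nz(1)] p0b by auto
    obtain \<theta> where l: "lift_on v \<theta> a b"
      and e: "\<theta> b - \<theta> a = (\<theta>12 (snd p0) - \<theta>12 a) + (\<theta>3 b - \<theta>3 (snd p0))"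
      using lift_glue[OF l12 l3 _ _ nz(2)] p0b by auto
    have "(\<Sum>p\<in>P. \<epsilon> p) = \<epsilon> p0 + (\<Sum>p\<in>P'. \<epsilon> p)"
      unfolding P'_def using p0 less.prems(1) by (simp add: sum.remove)
    then have "\<theta> b - \<theta> a = Arg (v b) - Arg (v a) + 2 * pi * (\<Sum>p\<in>P. \<epsilon> p)"
      using e e12 e2 e3 by (simp add: algebra_simps)
    then show ?thesis using l by blast
  qed
qed

lemma loop_winding_eqI:
  assumes l: "lift_on v \<theta> 0 1" and nz: "\<And>t. t \<in> {0..1} \<Longrightarrow> v t \<noteq> 0"
    and e: "\<theta> 1 - \<theta> 0 = 2 * pi * real_of_int k"
  shows "loop_winding v = k"
  unfolding loop_winding_def
proof (rule the_equality)
  show "\<exists>\<theta>. continuous_on {0..1} \<theta> \<and> (\<forall>t\<in>{0..1}. v t = complex_of_real (cmod (v t)) * cis (\<theta> t)) \<and>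
        \<theta> 1 - \<theta> 0 = 2 * pi * real_of_int k"
    using l e unfolding lift_on_def by blast
  fix k' :: int
  assume "\<exists>\<theta>. continuous_on {0..1} \<theta> \<and> (\<forall>t\<in>{0..1}. v t = complex_of_real (cmod (v t)) * cis (\<theta> t)) \<and>
        \<theta> 1 - \<theta> 0 = 2 * pi * real_of_int k'"
  then obtain \<theta>' where l': "lift_on v \<theta>' 0 1" and e': "\<theta>' 1 - \<theta>' 0 = 2 * pi * real_of_int k'"
    unfolding lift_on_def by blast
  have "\<theta>' 1 - \<theta>' 0 = \<theta> 1 - \<theta> 0" using lift_unique[OF l' l _ nz] by simp
  then have "2 * pi * real_of_int k' = 2 * pi * real_of_int k" using e e' by simp
  then show "k' = k" by simp
qed

definition clamp :: "real \<Rightarrow> real" where "clamp s = max 0 (min 1 s)"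
definition sig1 :: "complex \<Rightarrow> real" where "sig1 w = Re w + Im w"
definition sig2 :: "complex \<Rightarrow> real" where "sig2 w = Re w - Im w"
definition lam :: "complex \<Rightarrow> real" where
  "lam w = 2 * clamp (1 - 10 * Re w) + 2 * clamp ((sig1 w - 27/20) * 100) + 2 * clamp ((sig2 w - 27/20) * 100)"
definition Dm :: "complex \<Rightarrow> complex" where
  "Dm w = (if 27/20 < sig1 w then cis (pi/4) else if 27/20 < sig2 w then cis (-(pi/4)) else w ^ 4)"
definition FF :: "complex \<Rightarrow> complex" where
  "FF z = complex_of_real (cmod z * lam (sgn z)) * Dm (sgn z)"
definition S :: "real \<Rightarrow> complex" where "S t = cis (2 * pi * t)"
definition lamt :: "real \<Rightarrow> real" where "lamt t = lam (S t)"
definition G :: "real \<Rightarrow> real" where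
  "G t = (if 27/20 < sig1 (S t) then 1/8 else if 27/20 < sig2 (S t) then -1/8 else 4 * t)"
fun amp :: "nat \<Rightarrow> real \<Rightarrow> real" where
  "amp 0 t = 1"
| "amp (Suc n) t = lamt t * amp n (G t)"

lemma clamp_nonneg: "0 \<le> clamp s" and clamp_le1: "clamp s \<le> 1" unfolding clamp_def by auto
lemma clamp_pos_iff: "0 < clamp s \<longleftrightarrow> 0 < s" unfolding clamp_def by auto
lemma clamp_one: "1 \<le> s \<Longrightarrow> clamp s = 1" unfolding clamp_def by auto
lemma clamp_zero: "s \<le> 0 \<Longrightarrow> clamp s = 0" unfolding clamp_def by auto

lemma lam_nonneg: "0 \<le> lam w" unfolding lam_def using clamp_nonneg by (simp add: add_nonneg_nonneg)
lemma lam_le: "lam w \<le> 6" unfolding lam_def using clamp_le1 by (smt (verit, best))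

lemma S_Re: "Re (S t) = cos (2 * pi * t)" and S_Im: "Im (S t) = sin (2 * pi * t)"
  unfolding S_def by simp_all
lemma S_norm [simp]: "cmod (S t) = 1" unfolding S_def by simp
lemma S_nz [simp]: "S t \<noteq> 0" using S_norm[of t] by (metis norm_zero zero_neq_one)
lemma S_mult: "S a * S b = S (a + b)" unfolding S_def by (simp add: cis_mult algebra_simps)
lemma S_int: "k \<in> \<int> \<Longrightarrow> S (t + k) = S t"
proof -
  assume "k \<in> \<int>"
  have "S (t + k) = S t * cis (2 * pi * k)" unfolding S_def by (simp add: cis_mult algebra_simps)
  then show ?thesis using \<open>k \<in> \<int>\<close> by simp
qed
lemma S_eighth: "S (1/8) = cis (pi/4)" "S (-1/8) = cis (-(pi/4))" unfolding S_def by simp_all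
lemma S_pow4: "S t ^ 4 = S (4 * t)" unfolding S_def using Complex.DeMoivre[of "2*pi*t" 4] by (simp add: algebra_simps)
lemma S_cnj: "cnj (S t) = S (- t)" unfolding S_def by (simp add: cis_cnj)

lemma sgn_S: "0 < \<rho> \<Longrightarrow> sgn (complex_of_real \<rho> * S t) = S t"
  by (simp add: sgn_div_norm norm_mult scaleR_conv_of_real field_simps)

lemma FF_S: assumes "0 \<le> \<rho>"
  shows "FF (complex_of_real \<rho> * S t) = complex_of_real (\<rho> * lamt t) * S (G t)"
proof (cases "\<rho> = 0")
  case True then show ?thesis by (simp add: FF_def)
next
  case False
  then have r: "0 < \<rho>" using assms by simp
  have "Dm (S t) = S (G t)"
    unfolding Dm_def G_def using S_eighth S_pow4 by auto
  then show ?thesis unfolding FF_def lamt_def using r sgn_S[OF r] by (simp add: norm_mult)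
qed

lemma FFn_S: assumes "0 \<le> \<rho>"
  shows "(FF ^^ n) (complex_of_real \<rho> * S t) = complex_of_real (\<rho> * amp n t) * S ((G ^^ n) t)"
  using assms
proof (induction n arbitrary: \<rho> t)
  case 0 then show ?case by simp
next
  case (Suc n)
  have nn: "0 \<le> \<rho> * lamt t" using Suc.prems lam_nonneg unfolding lamt_def by simp
  have "(FF ^^ Suc n) (complex_of_real \<rho> * S t) = (FF ^^ n) (FF (complex_of_real \<rho> * S t))"
    by (simp only: funpow_Suc_right comp_def)
  also have "\<dots> = (FF ^^ n) (complex_of_real (\<rho> * lamt t) * S (G t))" using FF_S[OF Suc.prems] by simp
  also have "\<dots> = complex_of_real (\<rho> * lamt t * amp n (G t)) * S ((G ^^ n) (G t))" using Suc.IH[OF nn] by simp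
  also have "\<dots> = complex_of_real (\<rho> * amp (Suc n) t) * S ((G ^^ Suc n) t)"
    by (simp only: funpow_Suc_right comp_def amp.simps mult.assoc)
  finally show ?case .
qed

lemma amp_nonneg: "0 \<le> amp n t"
  by (induction n arbitrary: t) (auto simp: lamt_def lam_nonneg)

lemma amp_nz: "amp n t \<noteq> 0 \<Longrightarrow> k < n \<Longrightarrow> lamt ((G ^^ k) t) \<noteq> 0"
proof (induction n arbitrary: t k)
  case 0 then show ?case by simp
next
  case (Suc n)
  then have a: "lamt t \<noteq> 0" "amp n (G t) \<noteq> 0" by auto
  show ?case
  proof (cases k)
    case 0 then show ?thesis using a by simp
  next
    case (Suc k')
    then have "lamt ((G ^^ k') (G t)) \<noteq> 0" using Suc.IH[OF a(2)] Suc.prems by simp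
    then show ?thesis using Suc by (metis comp_apply funpow_Suc_right)
  qed
qed

lemma cos_nonpos_mid: "1/4 \<le> t \<Longrightarrow> t \<le> 3/4 \<Longrightarrow> cos (2 * pi * t) \<le> 0"
proof -
  assume a: "1/4 \<le> t" "t \<le> 3/4"
  have "cos (2 * pi * t) = - cos (2 * pi * t - pi)" by (simp add: cos_diff)
  moreover have "0 \<le> cos (2 * pi * t - pi)"
    using a by (intro cos_ge_zero) (auto simp: field_simps)
  ultimately show ?thesis by simp
qed

lemma cos_pos_low: "0 \<le> t \<Longrightarrow> t < 1/4 \<Longrightarrow> 0 < cos (2 * pi * t)"
proof -
  assume a: "0 \<le> t" "t < 1/4"
  have "0 \<le> 2 * pi * t" using a by simp
  moreover have "2 * pi * t < 2 * pi * (1/4)" using a by (intro mult_strict_left_mono) auto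
  moreover have "- (pi/2) < 0" by simp
  ultimately show ?thesis by (intro cos_gt_zero_pi) linarith+
qed

lemma cos_pos_high: "3/4 < t \<Longrightarrow> t \<le> 1 \<Longrightarrow> 0 < cos (2 * pi * t)"
proof -
  assume a: "3/4 < t" "t \<le> 1"
  have "cos (2 * pi * t) = cos (2 * pi * t - 2 * pi)" by (simp add: cos_diff)
  moreover have "0 < cos (2 * pi * t - 2 * pi)"
    using a by (intro cos_gt_zero_pi) (auto simp: field_simps)
  ultimately show ?thesis by simp
qed

lemma cos_nonpos_inv: "0 \<le> t \<Longrightarrow> t \<le> 1 \<Longrightarrow> cos (2 * pi * t) \<le> 0 \<Longrightarrow> 1/4 \<le> t \<and> t \<le> 3/4"
  using cos_pos_low cos_pos_high by force

lemma S_unit: "(Re (S t))^2 + (Im (S t))^2 = 1"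
  unfolding S_Re S_Im by (simp add: add.commute)

lemma S_bounds: "\<bar>Re (S t)\<bar> \<le> 1" "\<bar>Im (S t)\<bar> \<le> 1"
  unfolding S_Re S_Im by simp_all

lemma lam_core: assumes "Re (S t) \<le> 0" shows "lamt t = 2" "G t = 4 * t"
proof -
  have i: "Im (S t) \<le> 1" "- 1 \<le> Im (S t)" using S_bounds(2)[of t] by auto
  have s1: "sig1 (S t) \<le> 1" "sig2 (S t) \<le> 1" unfolding sig1_def sig2_def using assms i by auto
  show "lamt t = 2" unfolding lamt_def lam_def using s1 assms
    by (simp add: clamp_one clamp_zero)
  show "G t = 4 * t" unfolding G_def using s1 by auto
qed

lemma pow4_parts:
  fixes c sn :: real
  shows "Re (Complex c sn ^ 4) = c^4 - 6*c^2 * sn^2 + sn^4" "Im (Complex c sn ^ 4) = 4*c^3 * sn - 4*c * sn^3"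
  by (simp_all add: power4_eq_xxxx power2_eq_square power3_eq_cube algebra_simps)

lemma ramp_aux:
  fixes c sn :: real
  assumes u: "c^2 + sn^2 = 1" and c: "0 < c" "c < 1/10"
  defines "X \<equiv> c^4 - 6*c^2 * sn^2 + sn^4" and "Y \<equiv> 4*c^3 * sn - 4*c * sn^3"
  shows "1/10 \<le> X" "X + Y < 27/20" "X - Y < 27/20"
proof -
  have s2: "sn^2 \<le> 1" using u zero_le_power2[of c] by linarith
  have X1: "X = 1 - 8*c^2 * sn^2"
  proof -
    have "(c^2 + sn^2)^2 = 1" using u by simp
    then show ?thesis unfolding X_def by (simp add: power2_eq_square power4_eq_xxxx algebra_simps)
  qed
  have "c * c < (1/10) * (1/10)" using c by (intro mult_strict_mono) auto
  then have c2: "c^2 < 1/100" by (simp add: power2_eq_square)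
  have "c^2 * sn^2 \<le> c^2" using s2 by (simp add: mult_left_le)
  then show "1/10 \<le> X" using X1 c2 by linarith
  have XY: "X^2 + Y^2 = 1"
  proof -
    have "X^2 + Y^2 = (c^2 + sn^2)^4" unfolding X_def Y_def by (simp add: power2_eq_square power4_eq_xxxx power3_eq_cube algebra_simps)
    then show ?thesis using u by simp
  qed
  have Yeq: "Y = 4 * c * (sn * (c^2 - sn^2))" unfolding Y_def by (simp add: power2_eq_square power3_eq_cube algebra_simps)
  have sb: "\<bar>sn\<bar> \<le> 1" using s2 abs_square_le_1 by blast
  have z: "0 \<le> c^2" "0 \<le> sn^2" by simp_all
  have db: "\<bar>c^2 - sn^2\<bar> \<le> 1" unfolding abs_le_iff using u z by linarith
  have "\<bar>sn * (c^2 - sn^2)\<bar> \<le> 1" using sb db by (simp add: abs_mult mult_le_one)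
  then have Yb: "\<bar>Y\<bar> \<le> 4 * c" unfolding Yeq using c by (simp add: abs_mult mult_left_le)
  have "X^2 \<le> 1" using XY zero_le_power2[of Y] by linarith
  then have Xb: "\<bar>X\<bar> \<le> 1" using abs_square_le_1 by blast
  have "\<bar>X * Y\<bar> \<le> \<bar>Y\<bar>" using Xb by (simp add: abs_mult mult_left_le_one_le)
  then have xy: "2 * (X * Y) < 4/5" using Yb c by linarith
  have "(X + Y)^2 = 1 + 2 * (X * Y)" using XY by (simp add: power2_eq_square algebra_simps)
  moreover have sq: "(27/20::real)^2 = 729/400" by (simp add: power2_eq_square)
  ultimately have "(X + Y)^2 < (27/20)^2" using xy by linarith
  then show "X + Y < 27/20" by (rule power2_less_imp_less) simp
  have "(X - Y)^2 = 1 - 2 * (X * Y)" using XY by (simp add: power2_eq_square algebra_simps)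
  moreover have "- (4/5) < 2 * (X * Y)" using \<open>\<bar>X * Y\<bar> \<le> \<bar>Y\<bar>\<close> Yb c by linarith
  ultimately have "(X - Y)^2 < (27/20)^2" using sq by linarith
  then show "X - Y < 27/20" by (rule power2_less_imp_less) simp
qed

lemma ramp: assumes "0 < Re (S t)" "Re (S t) < 1/10" shows "lamt (4 * t) = 0"
proof -
  define c where "c = Re (S t)"
  define sn where "sn = Im (S t)"
  have St: "S t = Complex c sn" unfolding c_def sn_def by simp
  have u: "c^2 + sn^2 = 1" using S_unit unfolding c_def sn_def by simp
  have S4: "S (4 * t) = Complex c sn ^ 4" by (metis S_pow4 St)
  have r: "1/10 \<le> Re (S (4*t))" "sig1 (S (4*t)) < 27/20" "sig2 (S (4*t)) < 27/20"
    using ramp_aux[OF u] assms unfolding S4 sig1_def sig2_def pow4_parts c_def[symmetric] by auto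
  show ?thesis unfolding lamt_def lam_def using r by (simp add: clamp_zero)
qed

lemma sqrt2_bound: "34/25 \<le> sqrt 2"
proof -
  have "(34/25)^2 \<le> (2::real)" by (simp add: power2_eq_square)
  then show ?thesis by (rule real_le_rsqrt)
qed

lemma sig_eighth: "sig1 (S (1/8)) = sqrt 2" "sig2 (S (1/8)) = 0"
   "sig1 (S (-1/8)) = 0" "sig2 (S (-1/8)) = sqrt 2"
  unfolding sig1_def sig2_def S_eighth by (simp_all add: cos_45 sin_45)

lemma sink1: assumes "34/25 \<le> sig1 (S t)" shows "lamt t = 2" "G t = 1/8"
proof -
  have b: "Im (S t) \<le> 1" "Re (S t) \<le> 1" using S_bounds[of t] by auto
  have r: "1/10 < Re (S t)" "sig2 (S t) \<le> 27/20" using assms b unfolding sig1_def sig2_def by auto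
  show "lamt t = 2" unfolding lamt_def lam_def using assms r
    by (simp add: clamp_one clamp_zero)
  show "G t = 1/8" unfolding G_def using assms by auto
qed

lemma sink2: assumes "34/25 \<le> sig2 (S t)" shows "lamt t = 2" "G t = -1/8"
proof -
  have b: "- Im (S t) \<le> 1" "Re (S t) \<le> 1" using S_bounds[of t] by auto
  have r: "1/10 < Re (S t)" "sig1 (S t) \<le> 27/20" using assms b unfolding sig1_def sig2_def by auto
  show "lamt t = 2" unfolding lamt_def lam_def using assms r
    by (simp add: clamp_one clamp_zero)
  show "G t = -1/8" unfolding G_def using assms r by auto
qed

lemma sink1_fix: "amp n (1/8) = 2^n \<and> (G ^^ n) (1/8) = 1/8"
proof (induction n)
  case 0 then show ?case by simp
next
  case (Suc n)
  have s: "34/25 \<le> sig1 (S (1/8))" using sig_eighth sqrt2_bound by simp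
  have g: "G (1/8) = 1/8" and l: "lamt (1/8) = 2" using sink1[OF s] by auto
  have "(G ^^ Suc n) (1/8) = (G ^^ n) (G (1/8))" by (simp only: funpow_Suc_right comp_def)
  also have "\<dots> = (G ^^ n) (1/8)" by (simp only: g)
  also have "\<dots> = 1/8" using Suc.IH by (rule conjunct2)
  finally have "(G ^^ Suc n) (1/8) = 1/8" .
  moreover have "amp (Suc n) (1/8) = 2 ^ Suc n" unfolding amp.simps g l using Suc.IH by simp
  ultimately show ?case by simp
qed

lemma sink2_fix: "amp n (-1/8) = 2^n \<and> (G ^^ n) (-1/8) = -1/8"
proof (induction n)
  case 0 then show ?case by simp
next
  case (Suc n)
  have s: "34/25 \<le> sig2 (S (-1/8))" using sig_eighth sqrt2_bound by simp
  have g: "G (-1/8) = -1/8" and l: "lamt (-1/8) = 2" using sink2[OF s] by auto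
  have "(G ^^ Suc n) (-1/8) = (G ^^ n) (G (-1/8))" by (simp only: funpow_Suc_right comp_def)
  also have "\<dots> = (G ^^ n) (-1/8)" by (simp only: g)
  also have "\<dots> = -1/8" using Suc.IH by (rule conjunct2)
  finally have "(G ^^ Suc n) (-1/8) = -1/8" .
  moreover have "amp (Suc n) (-1/8) = 2 ^ Suc n" unfolding amp.simps g l using Suc.IH by simp
  ultimately show ?case by simp
qed

lemma sink1_orbit: assumes "34/25 \<le> sig1 (S t)" shows "amp (Suc n) t = 2^(Suc n) \<and> (G ^^ Suc n) t = 1/8"
proof -
  have g: "G t = 1/8" and l: "lamt t = 2" using sink1[OF assms] by auto
  have "(G ^^ Suc n) t = (G ^^ n) (G t)" by (simp only: funpow_Suc_right comp_def)
  also have "\<dots> = (G ^^ n) (1/8)" by (simp only: g)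
  also have "\<dots> = 1/8" using sink1_fix[of n] by (rule conjunct2)
  finally have "(G ^^ Suc n) t = 1/8" .
  moreover have "amp (Suc n) t = 2 ^ Suc n" unfolding amp.simps g l using sink1_fix[of n] by simp
  ultimately show ?thesis by simp
qed

lemma sink2_orbit: assumes "34/25 \<le> sig2 (S t)" shows "amp (Suc n) t = 2^(Suc n) \<and> (G ^^ Suc n) t = -1/8"
proof -
  have g: "G t = -1/8" and l: "lamt t = 2" using sink2[OF assms] by auto
  have "(G ^^ Suc n) t = (G ^^ n) (G t)" by (simp only: funpow_Suc_right comp_def)
  also have "\<dots> = (G ^^ n) (-1/8)" by (simp only: g)
  also have "\<dots> = -1/8" using sink2_fix[of n] by (rule conjunct2)
  finally have "(G ^^ Suc n) t = -1/8" .
  moreover have "amp (Suc n) t = 2 ^ Suc n" unfolding amp.simps g l using sink2_fix[of n] by simp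
  ultimately show ?thesis by simp
qed

lemma horseshoe: "(\<forall>k\<le>n. cos (2 * pi * (4^k * t)) \<le> 0) \<Longrightarrow> amp n t = 2^n \<and> (G ^^ n) t = 4^n * t"
proof (induction n arbitrary: t)
  case 0 then show ?case by simp
next
  case (Suc n)
  have c0: "Re (S t) \<le> 0" using Suc.prems[rule_format, of 0] by (simp add: S_Re)
  have hk: "\<forall>k\<le>n. cos (2 * pi * (4^k * (4 * t))) \<le> 0"
  proof (intro allI impI)
    fix k assume "k \<le> n"
    then have "cos (2 * pi * (4^(Suc k) * t)) \<le> 0" using Suc.prems by auto
    then show "cos (2 * pi * (4^k * (4 * t))) \<le> 0" by (simp add: algebra_simps)
  qed
  have "(G ^^ Suc n) t = (G ^^ n) (G t)" by (simp only: funpow_Suc_right comp_def)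
  with Suc.IH[OF hk] show ?case using lam_core[OF c0]
    by (simp add: algebra_simps)
qed

lemma cos_shift: "k \<in> \<int> \<Longrightarrow> cos (2 * pi * (y + k)) = cos (2 * pi * y)"
  using S_int[of k y] S_Re by metis

lemma lam_pos_ramp: assumes "lamt x \<noteq> 0" "\<not> 27/20 < sig1 (S x)" "\<not> 27/20 < sig2 (S x)"
  shows "Re (S x) < 1/10"
proof -
  have "lamt x = 2 * clamp (1 - 10 * Re (S x))" unfolding lamt_def lam_def using assms(2,3)
    by (simp add: clamp_zero)
  then have "0 < clamp (1 - 10 * Re (S x))" using assms(1) clamp_nonneg[of "1 - 10 * Re (S x)"] by auto
  then show ?thesis using clamp_pos_iff by auto
qed

lemma G_sink_cases: "27/20 < sig1 (S x) \<or> 27/20 < sig2 (S x) \<Longrightarrow> G x = 1/8 \<or> G x = -1/8"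
  unfolding G_def by auto

lemma G_four: "\<not> 27/20 < sig1 (S x) \<Longrightarrow> \<not> 27/20 < sig2 (S x) \<Longrightarrow> G x = 4 * x"
  unfolding G_def by auto

lemma charact:
  assumes n: "1 \<le> n" and a: "amp n t \<noteq> 0" and per: "S ((G ^^ n) t) = S t"
  shows "S t = S (1/8) \<or> S t = S (-1/8) \<or> (\<forall>k\<le>n. cos (2 * pi * (4^k * t)) \<le> 0)"
proof -
  have lampos: "lamt ((G ^^ k) t) \<noteq> 0" if "k < n" for k using amp_nz[OF a that] .
  show ?thesis
  proof (cases "\<exists>k<n. 27/20 < sig1 (S ((G ^^ k) t)) \<or> 27/20 < sig2 (S ((G ^^ k) t))")
    case True
    then obtain k where k: "k < n" "27/20 < sig1 (S ((G ^^ k) t)) \<or> 27/20 < sig2 (S ((G ^^ k) t))" by blast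
    define c where "c = G ((G ^^ k) t)"
    have c: "c = 1/8 \<or> c = -1/8" unfolding c_def using G_sink_cases k(2) by blast
    have cfix: "(G ^^ m) c = c" for m
    proof (cases "c = 1/8")
      case True
      have "(G ^^ m) c = (G ^^ m) (1/8)" by (simp only: True)
      also have "\<dots> = 1/8" using sink1_fix by (rule conjunct2)
      finally show ?thesis using True by (simp only:)
    next
      case False
      then have F: "c = -1/8" using c by simp
      have "(G ^^ m) c = (G ^^ m) (-1/8)" by (simp only: F)
      also have "\<dots> = -1/8" using sink2_fix by (rule conjunct2)
      finally show ?thesis using F by (simp only:)
    qed
    have "n = (n - Suc k) + Suc k" using k by simp
    then have "(G ^^ n) t = (G ^^ (n - Suc k)) ((G ^^ Suc k) t)" by (metis comp_apply funpow_add)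
    also have "\<dots> = (G ^^ (n - Suc k)) c" unfolding c_def by simp
    also have "\<dots> = c" by (rule cfix)
    finally have "S t = S c" using per by simp
    then show ?thesis using c by (metis)
  next
    case False
    then have nos: "\<not> 27/20 < sig1 (S ((G ^^ k) t))" "\<not> 27/20 < sig2 (S ((G ^^ k) t))" if "k < n" for k
      using that by auto
    have G4: "G ((G ^^ k) t) = 4 * (G ^^ k) t" if "k < n" for k
      using G_four nos[OF that] by blast
    have pw: "(G ^^ k) t = 4^k * t" if "k \<le> n" for k
      using that
    proof (induction k)
      case 0 then show ?case by simp
    next
      case (Suc k)
      then have "(G ^^ Suc k) t = 4 * (G ^^ k) t" using G4[of k] by simp
      then show ?case using Suc by simp
    qed
    have lt: "cos (2 * pi * (4^k * t)) \<le> 0" if k: "k < n" for k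
    proof (rule ccontr)
      assume "\<not> cos (2 * pi * (4^k * t)) \<le> 0"
      then have pos: "0 < Re (S ((G ^^ k) t))" using pw[of k] k by (simp add: S_Re)
      have small: "Re (S ((G ^^ k) t)) < 1/10" using lam_pos_ramp[OF lampos[OF k] nos[OF k]] .
      have z: "lamt ((G ^^ Suc k) t) = 0" using ramp[OF pos small] G4[OF k] by simp
      show False
      proof (cases "Suc k < n")
        case True then show False using lampos[OF True] z by simp
      next
        case False
        then have "Suc k = n" using k by simp
        then have "lamt t = 0" using z per unfolding lamt_def by simp
        then show False using lampos[of 0] n by simp
      qed
    qed
    have "cos (2 * pi * (4^k * t)) \<le> 0" if "k \<le> n" for k
    proof (cases "k < n")
      case True then show ?thesis using lt by simp
    next
      case False
      then have "k = n" using that by simp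
      then have "cos (2 * pi * (4^k * t)) = Re (S t)" using pw[of n] per by (simp add: S_Re[symmetric])
      also have "\<dots> = cos (2 * pi * (4^0 * t))" by (simp add: S_Re)
      also have "\<dots> \<le> 0" using lt[of 0] n by simp
      finally show ?thesis .
    qed
    then show ?thesis by simp
  qed
qed

primrec Wset :: "nat \<Rightarrow> nat set" where
  "Wset 0 = {0}"
| "Wset (Suc n) = (\<lambda>(d, w). d * 4^n + w) ` ({1, 2} \<times> Wset n)"

definition Jl :: "nat \<Rightarrow> nat \<Rightarrow> real" where "Jl n w = (real w + 1/4) / 4^n"
definition Jr :: "nat \<Rightarrow> nat \<Rightarrow> real" where "Jr n w = (real w + 3/4) / 4^n"

lemma W_bound: "w \<in> Wset n \<Longrightarrow> w < 4^n"
proof (induction n arbitrary: w)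
  case 0 then show ?case by simp
next
  case (Suc n)
  then obtain d w' where d: "d \<in> {1,2}" "w' \<in> Wset n" "w = d * 4^n + w'" by auto
  have w1: "w' < 4^n" using Suc.IH d by simp
  have e1: "d * 4^n \<le> 2 * 4^n" using d by auto
  have "w < 3 * 4^n" using d(3) e1 w1 by linarith
  then show ?case by simp
qed

lemma W_finite_card: "finite (Wset n) \<and> card (Wset n) = 2^n"
proof (induction n)
  case 0 then show ?case by simp
next
  case (Suc n)
  have inj: "inj_on (\<lambda>(d, w). d * 4^n + w) ({1::nat, 2} \<times> Wset n)"
  proof (rule inj_onI, clarify)
    fix d w d' w' assume a: "d \<in> {1,2}" "w \<in> Wset n" "d' \<in> {1,2}" "w' \<in> Wset n"
      and e: "d * 4^n + w = d' * 4^n + (w'::nat)"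
    have b: "w < 4^n" "w' < 4^n" using W_bound a by auto
    have "(d * 4^n + w) div 4^n = d" "(d' * 4^n + w') div 4^n = d'" using b by simp_all
    then have "d = d'" using e by simp
    then show "d = d' \<and> w = w'" using e by simp
  qed
  have "card (Wset (Suc n)) = card ({1::nat, 2} \<times> Wset n)" unfolding Wset.simps by (rule card_image[OF inj])
  also have "\<dots> = 2 * 2^n" using Suc by (simp add: card_cartesian_product)
  finally show ?case using Suc by simp
qed

lemma J_step:
  assumes "d \<in> {1::nat, 2}"
  shows "(t \<in> {Jl (Suc n) (d * 4^n + w)..Jr (Suc n) (d * 4^n + w)}) = (4 * t - d \<in> {Jl n w..Jr n w})"
proof -
  have p: "(0::real) < 4^n" by simp
  have "Jl (Suc n) (d * 4^n + w) = (Jl n w + d) / 4" "Jr (Suc n) (d * 4^n + w) = (Jr n w + d) / 4"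
    unfolding Jl_def Jr_def using p by (simp_all add: field_simps)
  then show ?thesis by auto
qed

lemma J_in:
  "w \<in> Wset n \<Longrightarrow> t \<in> {Jl n w..Jr n w} \<Longrightarrow>
     (1/4 \<le> t \<and> t \<le> 3/4) \<and> (1 \<le> n \<longrightarrow> 5/16 \<le> t \<and> t \<le> 11/16) \<and> (\<forall>k\<le>n. cos (2 * pi * (4^k * t)) \<le> 0)"
proof (induction n arbitrary: w t)
  case 0
  then have t: "1/4 \<le> t" "t \<le> 3/4" by (auto simp: Jl_def Jr_def)
  then show ?case using cos_nonpos_mid by simp
next
  case (Suc n)
  then obtain d w' where d: "d \<in> {1::nat,2}" "w' \<in> Wset n" "w = d * 4^n + w'" by auto
  have t': "4 * t - d \<in> {Jl n w'..Jr n w'}" using J_step[OF d(1)] Suc.prems d by simp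
  note IH = Suc.IH[OF d(2) t']
  have r: "5/16 \<le> t \<and> t \<le> 11/16" using IH d(1) by auto
  have c: "cos (2 * pi * (4^k * t)) \<le> 0" if "k \<le> Suc n" for k
  proof (cases k)
    case 0 then show ?thesis using cos_nonpos_mid r by simp
  next
    case (Suc k')
    then have "k' \<le> n" using that by simp
    then have "cos (2 * pi * (4^k' * (4 * t - d))) \<le> 0" using IH by simp
    moreover have "4^k' * (4 * t - d) = 4^k * t + real_of_int (- (4^k' * int d))"
      using Suc by (simp add: algebra_simps)
    ultimately show ?thesis using cos_shift[of "real_of_int (- (4^k' * int d))" "4^k * t"] by simp
  qed
  show ?case using r c by simp
qed

lemma J_cover:
  "0 \<le> t \<Longrightarrow> t < 1 \<Longrightarrow> (\<forall>k\<le>n. cos (2 * pi * (4^k * t)) \<le> 0) \<Longrightarrow> \<exists>w\<in>Wset n. t \<in> {Jl n w..Jr n w}"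
proof (induction n arbitrary: t)
  case 0
  then have "1/4 \<le> t \<and> t \<le> 3/4" using cos_nonpos_inv[of t] by simp
  then show ?case by (simp add: Jl_def Jr_def)
next
  case (Suc n)
  have t: "1/4 \<le> t" "t \<le> 3/4" using cos_nonpos_inv[of t] Suc.prems by auto
  have "t \<noteq> 3/4"
  proof
    assume "t = 3/4"
    then have "4^1 * t = 0 + 3" by simp
    then have "cos (2 * pi * (4^1 * t)) = cos (2 * pi * (0 + 3))" by (simp only:)
    also have "\<dots> = 1" using cos_shift[of 3 0] by simp
    finally show False using Suc.prems(3)[rule_format, of 1] by simp
  qed
  then have t3: "t < 3/4" using t by simp
  obtain d :: nat where d: "d \<in> {1,2}" "0 \<le> 4 * t - d" "4 * t - d < 1"
  proof (cases "4 * t < 2")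
    case True then show ?thesis using that[of 1] t by auto
  next
    case False then show ?thesis using that[of 2] t3 by auto
  qed
  have "\<forall>k\<le>n. cos (2 * pi * (4^k * (4 * t - d))) \<le> 0"
  proof (intro allI impI)
    fix k assume k: "k \<le> n"
    have "4^k * (4 * t - d) = 4^(Suc k) * t + real_of_int (- (4^k * int d))"
      by (simp add: algebra_simps)
    then have eq: "cos (2 * pi * (4^k * (4 * t - d))) = cos (2 * pi * (4^(Suc k) * t))"
      using cos_shift[of "real_of_int (- (4^k * int d))" "4^(Suc k) * t"] by simp
    have "Suc k \<le> Suc n" using k by simp
    then have "cos (2 * pi * (4^(Suc k) * t)) \<le> 0" using Suc.prems(3) by blast
    then show "cos (2 * pi * (4^k * (4 * t - d))) \<le> 0" using eq by simp
  qed
  then obtain w' where w': "w' \<in> Wset n" "4 * t - d \<in> {Jl n w'..Jr n w'}" using Suc.IH d by blast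
  have "d * 4^n + w' \<in> Wset (Suc n)" using d w' by auto
  moreover have "t \<in> {Jl (Suc n) (d * 4^n + w')..Jr (Suc n) (d * 4^n + w')}" using J_step[OF d(1)] w' by simp
  ultimately show ?case by blast
qed

lemma isCont_Re': "isCont Re w" by (rule bounded_linear.isCont[OF bounded_linear_Re continuous_ident])
lemma isCont_Im': "isCont Im w" by (rule bounded_linear.isCont[OF bounded_linear_Im continuous_ident])
lemma isCont_sig1: "isCont sig1 w" unfolding sig1_def by (intro continuous_intros isCont_Re' isCont_Im')
lemma isCont_sig2: "isCont sig2 w" unfolding sig2_def by (intro continuous_intros isCont_Re' isCont_Im')
lemma isCont_lam: "isCont lam w" unfolding lam_def clamp_def sig1_def sig2_def by (intro continuous_intros isCont_Re' isCont_Im')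

lemma ev_gt: fixes f :: "complex \<Rightarrow> real"
  assumes "isCont f w0" "c < f w0" shows "eventually (\<lambda>w. c < f w) (nhds w0)"
proof -
  have "(f \<longlongrightarrow> f w0) (nhds w0)" using assms(1) unfolding isCont_def by (rule tendsto_at_iff_tendsto_nhds[THEN iffD1])
  then show ?thesis using assms(2) by (rule order_tendstoD(1))
qed

lemma ev_lt: fixes f :: "complex \<Rightarrow> real"
  assumes "isCont f w0" "f w0 < c" shows "eventually (\<lambda>w. f w < c) (nhds w0)"
proof -
  have "(f \<longlongrightarrow> f w0) (nhds w0)" using assms(1) unfolding isCont_def by (rule tendsto_at_iff_tendsto_nhds[THEN iffD1])
  then show ?thesis using assms(2) by (rule order_tendstoD(2))
qed

lemma norm_Dm: "cmod w \<le> 2 \<Longrightarrow> cmod (Dm w) \<le> 16"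
proof -
  assume a: "cmod w \<le> 2"
  have "cmod (w ^ 4) \<le> 2 ^ 4" unfolding norm_power by (rule power_mono[OF a]) simp
  then show ?thesis unfolding Dm_def by auto
qed

lemma norm_Dm1: "cmod w \<le> 1 \<Longrightarrow> cmod (Dm w) \<le> 1"
proof -
  assume a: "cmod w \<le> 1"
  have "cmod (w ^ 4) \<le> 1" unfolding norm_power using a by (simp add: power_le_one)
  then show ?thesis unfolding Dm_def by auto
qed

definition H :: "complex \<Rightarrow> complex" where "H w = complex_of_real (lam w) * Dm w"

lemma isCont_H:
  assumes u: "cmod w0 = 1"
  shows "isCont H w0"
proof -
  have i1: "\<bar>Im w0\<bar> \<le> 1" using abs_Im_le_cmod[of w0] u by linarith
  have r1: "\<bar>Re w0\<bar> \<le> 1" using abs_Re_le_cmod[of w0] u by linarith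
  have Ib: "Im w0 \<le> 1" "- Im w0 \<le> 1" "Re w0 \<le> 1" using abs_le_D1[OF i1] abs_le_D2[OF i1] abs_le_D1[OF r1] by simp_all
  consider (a) "27/20 < sig1 w0" | (b) "sig1 w0 < 27/20" "27/20 < sig2 w0"
    | (c) "sig1 w0 < 27/20" "sig2 w0 < 27/20" | (d) "sig1 w0 = 27/20 \<or> sig2 w0 = 27/20"
    by linarith
  then show ?thesis
  proof cases
    case a
    have ev: "eventually (\<lambda>w. H w = complex_of_real (lam w) * cis (pi/4)) (nhds w0)"
      using ev_gt[OF isCont_sig1 a] by eventually_elim (simp add: H_def Dm_def)
    show ?thesis unfolding isCont_cong[OF ev] by (intro continuous_intros isCont_lam)
  next
    case b
    have ev: "eventually (\<lambda>w. H w = complex_of_real (lam w) * cis (-(pi/4))) (nhds w0)"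
      using ev_lt[OF isCont_sig1 b(1)] ev_gt[OF isCont_sig2 b(2)] by eventually_elim (simp add: H_def Dm_def)
    show ?thesis unfolding isCont_cong[OF ev] by (intro continuous_intros isCont_lam)
  next
    case c
    have ev: "eventually (\<lambda>w. H w = complex_of_real (lam w) * w ^ 4) (nhds w0)"
      using ev_lt[OF isCont_sig1 c(1)] ev_lt[OF isCont_sig2 c(2)] by eventually_elim (simp add: H_def Dm_def)
    show ?thesis unfolding isCont_cong[OF ev] by (intro continuous_intros isCont_lam)
  next
    case d
    have l0: "lam w0 = 0"
    proof -
      have "1 - 10 * Re w0 \<le> 0" "(sig1 w0 - 27/20) * 100 \<le> 0" "(sig2 w0 - 27/20) * 100 \<le> 0"
        using d Ib unfolding sig1_def sig2_def by auto
      then show ?thesis unfolding lam_def by (simp add: clamp_zero)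
    qed
    have H0: "H w0 = 0" unfolding H_def l0 by simp
    have ev2: "eventually (\<lambda>w. cmod w < 2) (nhds w0)"
    proof (rule ev_lt[of w0 cmod 2])
      show "isCont cmod w0" by (rule continuous_norm[OF continuous_ident])
      show "cmod w0 < 2" using u by linarith
    qed
    have "(H \<longlongrightarrow> 0) (nhds w0)"
    proof (rule Lim_null_comparison)
      show "eventually (\<lambda>w. norm (H w) \<le> 16 * lam w) (nhds w0)"
        using ev2
      proof eventually_elim
        case (elim w)
        have "norm (H w) = lam w * cmod (Dm w)" unfolding H_def using lam_nonneg[of w] by (simp add: norm_mult)
        also have "\<dots> \<le> lam w * 16" using norm_Dm[of w] elim lam_nonneg[of w] by (intro mult_left_mono) auto
        finally show ?case by simp
      qed
      have "(lam \<longlongrightarrow> lam w0) (nhds w0)" using isCont_lam[of w0] unfolding isCont_def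
        by (rule tendsto_at_iff_tendsto_nhds[THEN iffD1])
      then have "((\<lambda>w. 16 * lam w) \<longlongrightarrow> 16 * lam w0) (nhds w0)"
        by (intro tendsto_intros)
      then show "((\<lambda>w. 16 * lam w) \<longlongrightarrow> 0) (nhds w0)" using l0 by simp
    qed
    then have "(H \<longlongrightarrow> H w0) (nhds w0)" using H0 by simp
    then show ?thesis unfolding isCont_def by (rule tendsto_at_iff_tendsto_nhds[THEN iffD2])
  qed
qed

lemma FF_H: "FF z = complex_of_real (cmod z) * H (sgn z)"
  unfolding FF_def H_def by simp

lemma FF_zero [simp]: "FF 0 = 0" unfolding FF_def by simp

lemma continuous_FF: "continuous_on UNIV FF"
proof -
  have "isCont FF z" for z
  proof (cases "z = 0")
    case False
    have u: "cmod (sgn z) = 1" using False by (simp add: norm_sgn)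
    have "isCont (\<lambda>z. H (sgn z)) z"
      using isCont_H[OF u] False by (intro continuous_at_compose[unfolded o_def, of _ sgn H] continuous_intros) auto
    then show ?thesis unfolding FF_H by (intro continuous_intros) auto
  next
    case True
    have "(FF \<longlongrightarrow> 0) (at 0)"
    proof (rule Lim_null_comparison)
      show "eventually (\<lambda>w. norm (FF w) \<le> 6 * norm w) (at 0)"
      proof (rule always_eventually, rule allI)
        fix w :: complex
        have "norm (FF w) = cmod w * lam (sgn w) * cmod (Dm (sgn w))"
          unfolding FF_def using lam_nonneg[of "sgn w"] by (simp add: norm_mult)
        also have "\<dots> \<le> cmod w * 6 * 1"
          using lam_le[of "sgn w"] lam_nonneg[of "sgn w"] norm_Dm1[of "sgn w"]
          by (intro mult_mono) (auto simp: norm_sgn)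
        finally show "norm (FF w) \<le> 6 * norm w" by simp
      qed
      show "((\<lambda>w. 6 * norm w) \<longlongrightarrow> 0) (at (0::complex))"
        by (auto intro!: tendsto_eq_intros)
    qed
    then show ?thesis using True unfolding isCont_def by simp
  qed
  then show ?thesis by (simp add: continuous_at_imp_continuous_on)
qed

lemma continuous_FFn: "continuous_on UNIV (FF ^^ n)"
proof (induction n)
  case 0 then show ?case by (simp add: continuous_on_id)
next
  case (Suc n)
  have "continuous_on UNIV (FF \<circ> (FF ^^ n))"
    using continuous_on_compose[OF Suc continuous_on_subset[OF continuous_FF]] by auto
  then show ?case by simp
qed

lemma S_eq_shift: assumes "S a = S b" shows "\<exists>m::int. a = b + m"
proof -
  obtain m :: int where "2 * pi * a = 2 * pi * b + 2 * pi * m" using cis_eq_int assms unfolding S_def by blast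
  then have "2 * pi * a = 2 * pi * (b + m)" by (simp add: algebra_simps)
  then show ?thesis by auto
qed

lemma FFn_S1: "(FF ^^ n) (S t) = complex_of_real (amp n t) * S ((G ^^ n) t)"
  using FFn_S[of 1 n t] by simp

lemma amp_cmod: "amp n t = cmod ((FF ^^ n) (S t))"
  unfolding FFn_S1 using amp_nonneg[of n t] by (simp add: norm_mult)

lemma amp_S: "S t = S t' \<Longrightarrow> amp n t = amp n t'"
  using amp_cmod by metis

lemma norm_S_of_real: "cmod (complex_of_real a * S t) = \<bar>a\<bar>"
  by (simp add: norm_mult)

lemma amp_periodic_cases:
  assumes n: "1 \<le> n" and a: "amp n t \<noteq> 0" and per: "S ((G ^^ n) t) = S t"
  shows "amp n t = 2^n"
proof -
  have c: "S t = S (1/8) \<or> S t = S (-1/8) \<or> (\<forall>k\<le>n. cos (2 * pi * (4^k * t)) \<le> 0)"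
    using charact[OF n a per] .
  then show ?thesis
  proof (elim disjE)
    assume "S t = S (1/8)"
    then show ?thesis using amp_S[of t "1/8" n] sink1_fix[of n] by simp
  next
    assume "S t = S (-1/8)"
    then show ?thesis using amp_S[of t "-1/8" n] sink2_fix[of n] by simp
  next
    assume "\<forall>k\<le>n. cos (2 * pi * (4^k * t)) \<le> 0"
    then show ?thesis using horseshoe by blast
  qed
qed

lemma no_periodic: assumes "periodic_point FF x" shows "x = 0"
proof (rule ccontr)
  assume x0: "x \<noteq> 0"
  obtain n where n: "1 \<le> n" "(FF ^^ n) x = x" using assms unfolding periodic_point_def by blast
  define t where "t = Arg x / (2 * pi)"
  have St: "S t = cis (Arg x)" unfolding S_def t_def by simp
  have x: "x = complex_of_real (cmod x) * S t" unfolding St by (metis rcis_cmod_Arg rcis_def)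
  have "(FF ^^ n) x = complex_of_real (cmod x * amp n t) * S ((G ^^ n) t)"
    using FFn_S[of "cmod x" n t] x by simp
  then have e: "complex_of_real (cmod x * amp n t) * S ((G ^^ n) t) = complex_of_real (cmod x) * S t"
    using n(2) x by simp
  have cx: "0 < cmod x" using x0 by simp
  have "cmod x * amp n t = cmod x"
  proof -
    have N1: "cmod (complex_of_real (cmod x * amp n t) * S ((G ^^ n) t)) = cmod x * amp n t"
      unfolding norm_S_of_real using amp_nonneg[of n t] by simp
    have N2: "cmod (complex_of_real (cmod x) * S t) = cmod x" unfolding norm_S_of_real by simp
    have "cmod (complex_of_real (cmod x * amp n t) * S ((G ^^ n) t)) = cmod (complex_of_real (cmod x) * S t)"
      using e by (rule arg_cong)
    then show ?thesis using N1 N2 by linarith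
  qed
  then have a1: "amp n t = 1" using cx by simp
  then have "complex_of_real (cmod x) * S ((G ^^ n) t) = complex_of_real (cmod x) * S t" using e by simp
  then have per: "S ((G ^^ n) t) = S t" using cx by simp
  have "amp n t = 2^n" using amp_periodic_cases[OF n(1) _ per] a1 by simp
  moreover have "1 < (2::real)^n" by (rule one_less_power) (use n(1) in auto)
  then have "(2::real)^n \<noteq> 1" by simp
  ultimately show False using a1 by simp
qed

lemma lamt_zero0: "lamt 0 = 0"
proof -
  have "S 0 = 1" unfolding S_def by simp
  then show ?thesis unfolding lamt_def lam_def sig1_def sig2_def by (simp add: clamp_zero)
qed

definition tau :: "nat \<Rightarrow> real" where "tau m = 1/3 - 1/(12 * 4^m)"

lemma tau_step: "4 * tau (Suc m) = tau m + 1"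
  unfolding tau_def by (simp add: field_simps)

lemma tau_range: "1/4 \<le> tau m \<and> tau m \<le> 3/4"
proof -
  have "(1::real) \<le> 4^m" by simp
  then have "1/(12 * 4^m) \<le> (1::real)/12" by (simp add: field_simps)
  moreover have "0 < 1/(12 * (4::real)^m)" by simp
  ultimately show ?thesis unfolding tau_def by linarith
qed

lemma not_isolated: "\<not> isolated_invariant_set FF {0}"
proof
  assume "isolated_invariant_set FF {0}"
  then obtain N where N: "compact N" "{0} = Inv FF N" "{0} \<subseteq> interior N"
    unfolding isolated_invariant_set_def by blast
  have "0 \<in> interior N" using N(3) by simp
  then obtain \<delta> where d: "0 < \<delta>" "ball 0 \<delta> \<subseteq> N" using mem_interior by blast
  define \<rho> where "\<rho> = \<delta> / 4"
  have r: "0 < \<rho>" unfolding \<rho>_def using d by simp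
  define xs where "xs k = (if k \<le> 0 then complex_of_real (\<rho> / 2 ^ nat (- k)) * S (tau (nat (- k)))
       else if k = 1 then complex_of_real (2 * \<rho>) else 0)" for k :: int
  have bound: "cmod (xs k) \<le> 2 * \<rho>" for k
  proof -
    have h: "\<rho> / 2 ^ nat (- k) \<le> \<rho>" using r by (simp add: divide_le_eq one_le_power)
    have h0: "0 \<le> \<rho> / 2 ^ nat (- k)" using r by simp
    show ?thesis
    proof (cases "k \<le> 0")
      case True
      then have "xs k = complex_of_real (\<rho> / 2 ^ nat (- k)) * S (tau (nat (- k)))" unfolding xs_def by simp
      then have "cmod (xs k) = \<bar>\<rho> / 2 ^ nat (- k)\<bar>" by (simp only: norm_S_of_real)
      then have "cmod (xs k) = \<rho> / 2 ^ nat (- k)" using abs_of_nonneg[OF h0] by simp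
      then show ?thesis using h r by simp
    next
      case False
      then show ?thesis unfolding xs_def using r by auto
    qed
  qed
  have inN: "xs k \<in> N" for k
  proof -
    have "cmod (xs k) < \<delta>" using bound[of k] d r unfolding \<rho>_def by simp
    then have "xs k \<in> ball 0 \<delta>" by simp
    then show ?thesis using d by auto
  qed
  have step: "FF (xs k) = xs (k + 1)" for k
  proof -
    consider (neg) "k \<le> -1" | (z) "k = 0" | (o) "k = 1" | (big) "2 \<le> k" by linarith
    then show ?thesis
    proof cases
      case neg
      define m' where "m' = nat (- k) - 1"
      have m: "nat (- k) = Suc m'" "nat (- (k + 1)) = m'" unfolding m'_def using neg by auto
      have c0: "Re (S (tau (Suc m'))) \<le> 0" unfolding S_Re using tau_range cos_nonpos_mid by blast
      have "FF (xs k) = FF (complex_of_real (\<rho> / 2 ^ Suc m') * S (tau (Suc m')))"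
        unfolding xs_def m using neg by simp
      also have "\<dots> = complex_of_real (\<rho> / 2 ^ Suc m' * 2) * S (4 * tau (Suc m'))"
        using FF_S[of "\<rho> / 2 ^ Suc m'" "tau (Suc m')"] lam_core[OF c0] r by simp
      also have "S (4 * tau (Suc m')) = S (tau m')" unfolding tau_step using S_int[of 1 "tau m'"] by simp
      also have "\<rho> / 2 ^ Suc m' * 2 = \<rho> / 2 ^ m'" by simp
      finally show ?thesis unfolding xs_def m using neg by simp
    next
      case z
      have c0: "Re (S (tau 0)) \<le> 0" unfolding S_Re using tau_range cos_nonpos_mid by blast
      have t0: "4 * tau 0 = 0 + 1" unfolding tau_def by simp
      have "FF (xs k) = FF (complex_of_real \<rho> * S (tau 0))" unfolding xs_def z by simp
      also have "\<dots> = complex_of_real (\<rho> * 2) * S (4 * tau 0)"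
        using FF_S[of \<rho> "tau 0"] lam_core[OF c0] r by simp
      also have "S (4 * tau 0) = 1" unfolding t0 using S_int[of 1 0] by (simp add: S_def)
      finally show ?thesis unfolding xs_def z by simp
    next
      case o
      have "xs k = complex_of_real (2 * \<rho>) * S 0" unfolding xs_def o by (simp add: S_def)
      then have "FF (xs k) = complex_of_real (2 * \<rho> * lamt 0) * S (G 0)"
        using FF_S[of "2 * \<rho>" 0] r by simp
      then show ?thesis unfolding lamt_zero0 xs_def o by simp
    next
      case big
      then show ?thesis unfolding xs_def by simp
    qed
  qed
  have "xs 0 \<in> Inv FF N" unfolding Inv_def using inN step by blast
  then have "xs 0 = 0" using N(2) by blast
  moreover have "xs 0 \<noteq> 0" unfolding xs_def using r by simp
  ultimately show False by simp
qed

lemma sin_ge_sqrt3: assumes "pi/3 \<le> x" "x \<le> 2*pi/3" shows "sqrt 3 / 2 \<le> sin x"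
proof (cases "x \<le> pi/2")
  case True
  have "sin (pi/3) \<le> sin x" by (rule sin_monotone_2pi_le) (use assms True in auto)
  then show ?thesis by (simp add: sin_60)
next
  case False
  have "sin (pi/3) \<le> sin (pi - x)" by (rule sin_monotone_2pi_le) (use assms False in auto)
  then show ?thesis by (simp add: sin_60)
qed

lemma cos_sin_piece: assumes "1/12 \<le> t" "t \<le> 1/6" shows "34/25 \<le> cos (2*pi*t) + sin (2*pi*t)"
proof -
  define a where "a = 2 * pi * t"
  have a1: "pi/6 \<le> a" "a \<le> pi/3" unfolding a_def using assms by (auto simp: field_simps)
  have ca: "0 < cos a" using a1 pi_gt_zero by (intro cos_gt_zero_pi) linarith+
  have sa: "0 < sin a" using a1 pi_gt_zero by (intro sin_gt_zero) linarith+
  have "(cos a + sin a)^2 = ((sin a)^2 + (cos a)^2) + 2 * sin a * cos a" by (simp add: power2_eq_square algebra_simps)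
  also have "\<dots> = 1 + sin (2 * a)" by (simp only: sin_cos_squared_add sin_double)
  finally have sq: "(cos a + sin a)^2 = 1 + sin (2 * a)" .
  have s3: "sqrt 3 / 2 \<le> sin (2 * a)" using a1 by (intro sin_ge_sqrt3) auto
  have r3: "17/10 \<le> sqrt (3::real)" by (rule real_le_rsqrt) (simp add: power2_eq_square)
  have n: "(34/25::real)^2 = 1156/625" by (simp add: power2_eq_square)
  have "(34/25)^2 \<le> (cos a + sin a)^2" unfolding sq n using s3 r3 by linarith
  then have "34/25 \<le> cos a + sin a" by (rule power2_le_imp_le) (use ca sa in simp)
  then show ?thesis unfolding a_def .
qed

lemma sig1_piece: "1/12 \<le> t \<Longrightarrow> t \<le> 1/6 \<Longrightarrow> 34/25 \<le> sig1 (S t)"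
  unfolding sig1_def S_Re S_Im by (rule cos_sin_piece)

lemma sig2_piece: assumes "5/6 \<le> t" "t \<le> 11/12" shows "34/25 \<le> sig2 (S t)"
proof -
  define t' where "t' = 1 - t"
  have e: "S t = S (- t')" unfolding t'_def using S_int[of 1 "- (1 - t)"] by simp
  have "Re (S t) = cos (2*pi*t')" using e S_Re[of "-t'"] by simp
  moreover have "Im (S t) = - sin (2*pi*t')" using e S_Im[of "-t'"] by simp
  ultimately have "sig2 (S t) = cos (2*pi*t') + sin (2*pi*t')" unfolding sig2_def by simp
  moreover have "34/25 \<le> cos (2*pi*t') + sin (2*pi*t')" using assms unfolding t'_def by (intro cos_sin_piece) auto
  ultimately show ?thesis by simp
qed

lemma int_zero: fixes m :: int assumes "-1 < real_of_int m" "real_of_int m < 1" shows "m = 0"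
proof -
  have "-1 < m" "m < 1" using assms by simp_all
  then show ?thesis by linarith
qed

lemma notR_cross: assumes "1 < A" "-pi < \<phi>" "\<phi> < pi" "\<phi> \<noteq> 0"
  shows "1 - complex_of_real A * cis \<phi> \<notin> \<real>\<^sub>\<le>\<^sub>0"
proof -
  have "sin \<phi> \<noteq> 0"
  proof (cases "0 < \<phi>")
    case True then show ?thesis using sin_gt_zero[of \<phi>] assms by simp
  next
    case False then show ?thesis using sin_gt_zero[of "- \<phi>"] assms by simp
  qed
  then have "Im (1 - complex_of_real A * cis \<phi>) \<noteq> 0" using assms by simp
  then show ?thesis by (auto simp: complex_nonpos_Reals_iff)
qed

lemma u_formula: "(FF ^^ n) (S t) * cnj (S t) = complex_of_real (amp n t) * S ((G ^^ n) t - t)"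
proof -
  have "S ((G ^^ n) t) * cnj (S t) = S ((G ^^ n) t - t)" unfolding S_cnj S_mult by simp
  then show ?thesis unfolding FFn_S1 by (simp add: mult.assoc)
qed

lemma bad_points:
  assumes n: "1 \<le> n" and t: "t \<in> {0..1}"
    and im: "Im ((FF ^^ n) (S t) * cnj (S t)) = 0" and re: "1 \<le> Re ((FF ^^ n) (S t) * cnj (S t))"
  shows "t \<in> {1/12..1/6} \<or> t \<in> {5/6..11/12} \<or> (\<exists>w\<in>Wset n. t \<in> {Jl n w..Jr n w})"
proof -
  define u where "u = (FF ^^ n) (S t) * cnj (S t)"
  define A where "A = amp n t"
  define x where "x = (G ^^ n) t - t"
  have u: "u = complex_of_real A * S x" unfolding u_def A_def x_def by (rule u_formula)
  have A0: "0 \<le> A" unfolding A_def by (rule amp_nonneg)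
  have ur: "u = complex_of_real (Re u)" using im unfolding u_def by (simp add: complex_eq_iff)
  have "cmod u = A" unfolding u using A0 by (simp add: norm_mult)
  moreover have "cmod u = Re u"
  proof -
    have "cmod u = cmod (complex_of_real (Re u))" using ur by (rule arg_cong)
    also have "\<dots> = \<bar>Re u\<bar>" by (rule norm_of_real)
    also have "\<dots> = Re u" using re unfolding u_def by simp
    finally show ?thesis .
  qed
  ultimately have AR: "A = Re u" by simp
  then have A1: "1 \<le> A" using re unfolding u_def by simp
  have "complex_of_real A * S x = complex_of_real A * 1" using u ur AR by simp
  then have Sx: "S x = 1" using A1 by simp
  have per: "S ((G ^^ n) t) = S t"
  proof -
    have "S ((G ^^ n) t) = S x * S t" unfolding S_mult x_def by simp
    then show ?thesis using Sx by simp
  qed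
  have a: "amp n t \<noteq> 0" using A1 unfolding A_def by simp
  have "S t = S (1/8) \<or> S t = S (-1/8) \<or> (\<forall>k\<le>n. cos (2 * pi * (4^k * t)) \<le> 0)"
    by (rule charact[OF n a per])
  then show ?thesis
  proof (elim disjE)
    assume "S t = S (1/8)"
    then obtain m :: int where m: "t = 1/8 + m" using S_eq_shift by blast
    then have "m = 0" using t by (intro int_zero) auto
    then show ?thesis using m by simp
  next
    assume "S t = S (-1/8)"
    then obtain m :: int where m: "t = -1/8 + m" using S_eq_shift by blast
    then have "m - 1 = 0" using t by (intro int_zero) auto
    then have "m = 1" by simp
    then show ?thesis using m by simp
  next
    assume h: "\<forall>k\<le>n. cos (2 * pi * (4^k * t)) \<le> 0"
    have "t \<noteq> 1"
    proof
      assume "t = 1"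
      then have "cos (2 * pi * (4^0 * t)) = 1" by simp
      then show False using h by auto
    qed
    then have "t < 1" using t by simp
    then show ?thesis using J_cover[of t n] t h by auto
  qed
qed

lemma piece_lift:
  assumes A: "1 < A" and ab: "\<alpha> \<le> \<beta>" and cont: "continuous_on {\<alpha>..\<beta>} \<phi>"
    and v: "\<And>t. t \<in> {\<alpha>..\<beta>} \<Longrightarrow> v t = 1 - complex_of_real A * cis (\<phi> t)"
    and r1: "-pi < \<phi> \<alpha>" "\<phi> \<alpha> < pi" "\<phi> \<alpha> \<noteq> 0" and r2: "-pi < \<phi> \<beta>" "\<phi> \<beta> < pi" "\<phi> \<beta> \<noteq> 0"
    and e: "(\<phi> \<alpha> < 0 \<and> 0 < \<phi> \<beta> \<and> \<epsilon> = 1) \<or> (0 < \<phi> \<alpha> \<and> \<phi> \<beta> < 0 \<and> \<epsilon> = -1)"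
  shows "v \<alpha> \<notin> \<real>\<^sub>\<le>\<^sub>0 \<and> v \<beta> \<notin> \<real>\<^sub>\<le>\<^sub>0 \<and>
    (\<exists>\<psi>. lift_on v \<psi> \<alpha> \<beta> \<and> \<psi> \<beta> - \<psi> \<alpha> = Arg (v \<beta>) - Arg (v \<alpha>) + 2 * pi * real_of_int \<epsilon>)"
proof -
  have "v \<alpha> \<notin> \<real>\<^sub>\<le>\<^sub>0" using v[of \<alpha>] ab notR_cross[OF A r1] by simp
  moreover have "v \<beta> \<notin> \<real>\<^sub>\<le>\<^sub>0" using v[of \<beta>] ab notR_cross[OF A r2] by simp
  moreover have "\<exists>\<psi>. lift_on v \<psi> \<alpha> \<beta> \<and> \<psi> \<beta> - \<psi> \<alpha> = Arg (v \<beta>) - Arg (v \<alpha>) + 2 * pi * real_of_int \<epsilon>"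
    using e
  proof (elim disjE conjE)
    assume "\<phi> \<alpha> < 0" "0 < \<phi> \<beta>" "\<epsilon> = 1"
    then show ?thesis using cross_pos[OF A ab cont v r1(1) _ _ r2(2)] by simp
  next
    assume "0 < \<phi> \<alpha>" "\<phi> \<beta> < 0" "\<epsilon> = -1"
    then show ?thesis using cross_neg[OF A ab cont v _ r1(2) r2(1)] by simp
  qed
  ultimately show ?thesis by blast
qed

lemma u_not_one: assumes n: "1 \<le> n" shows "(FF ^^ n) (S t) * S (- t) \<noteq> 1"
proof
  assume h: "(FF ^^ n) (S t) * S (- t) = 1"
  define x where "x = (G ^^ n) t - t"
  have u: "complex_of_real (amp n t) * S x = 1" using h u_formula[of n t] unfolding x_def S_cnj by simp
  have "cmod (complex_of_real (amp n t) * S x) = amp n t" using amp_nonneg[of n t] by (simp add: norm_mult)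
  then have a1: "amp n t = 1" using u by simp
  then have Sx: "S x = 1" using u by simp
  have per: "S ((G ^^ n) t) = S t"
  proof -
    have "S ((G ^^ n) t) = S x * S t" unfolding S_mult x_def by simp
    then show ?thesis using Sx by simp
  qed
  have "amp n t = 2^n" using amp_periodic_cases[OF n _ per] a1 by simp
  moreover have "1 < (2::real)^n" by (rule one_less_power) (use n in auto)
  ultimately show False using a1 by simp
qed

lemma J_bounds: assumes "1 \<le> n" "w \<in> Wset n"
  shows "5/16 \<le> Jl n w" "Jl n w < Jr n w" "Jr n w \<le> 11/16"
proof -
  show lr: "Jl n w < Jr n w" unfolding Jl_def Jr_def by (simp add: divide_strict_right_mono)
  show "5/16 \<le> Jl n w" using J_in[OF assms(2), of "Jl n w"] lr assms(1) by simp
  show "Jr n w \<le> 11/16" using J_in[OF assms(2), of "Jr n w"] lr assms(1) by simp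
qed

lemma index_lemma:
  assumes n: "1 \<le> n" and r: "0 < r"
  shows "loop_winding (\<lambda>t. (0 + complex_of_real r * cis (2 * pi * t)) - (FF ^^ n) (0 + complex_of_real r * cis (2 * pi * t))) = 2^n - 1"
proof -
  define v where "v t = 1 - (FF ^^ n) (S t) * S (- t)" for t
  define JP where "JP = (\<lambda>w. (Jl n w, Jr n w)) ` Wset n"
  define SP where "SP = {(1/12::real, 1/6::real), (5/6, 11/12)}"
  define P where "P = JP \<union> SP"
  define \<epsilon> where "\<epsilon> p = (if p \<in> JP then 1 else -1::int)" for p
  have finW: "finite (Wset n)" and cardW: "card (Wset n) = 2^n" using W_finite_card by auto
  have injJ: "inj_on (\<lambda>w. (Jl n w, Jr n w)) (Wset n)" by (rule inj_onI) (simp add: Jl_def)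
  have cardJP: "card JP = 2^n" unfolding JP_def using card_image[OF injJ] cardW by simp
  have finJP: "finite JP" unfolding JP_def using finW by simp
  have finP: "finite P" unfolding P_def SP_def using finJP by simp
  have JPb: "5/16 \<le> fst p \<and> fst p < snd p \<and> snd p \<le> 11/16" if "p \<in> JP" for p
    using that J_bounds[OF n] unfolding JP_def by auto
  have disj: "JP \<inter> SP = {}" using JPb unfolding SP_def by fastforce
  have sumP: "(\<Sum>p\<in>P. \<epsilon> p) = 2^n - 2"
  proof -
    have "(\<Sum>p\<in>P. \<epsilon> p) = (\<Sum>p\<in>JP. \<epsilon> p) + (\<Sum>p\<in>SP. \<epsilon> p)"
      unfolding P_def using finJP disj by (intro sum.union_disjoint) (auto simp: SP_def)
    moreover have "(\<Sum>p\<in>JP. \<epsilon> p) = int (card JP)" unfolding \<epsilon>_def by simp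
    moreover have "(\<Sum>p\<in>SP. \<epsilon> p) = -2"
    proof -
      have "(1/12::real, 1/6::real) \<notin> JP" "(5/6::real, 11/12::real) \<notin> JP" using disj unfolding SP_def by auto
      then show ?thesis unfolding SP_def \<epsilon>_def by simp
    qed
    ultimately show ?thesis using cardJP by simp
  qed
  have cS: "continuous_on A S" for A unfolding S_def by (intro continuous_intros)
  have contv: "continuous_on {0..1} v"
  proof -
    have "continuous_on {0..1} (\<lambda>t. (FF ^^ n) (S t))"
      using continuous_on_compose2[OF continuous_FFn cS] by auto
    moreover have "continuous_on {0..1} (\<lambda>t. S (- t))" unfolding S_def by (intro continuous_intros)
    ultimately show ?thesis unfolding v_def by (intro continuous_intros)
  qed
  have vform: "v t = 1 - complex_of_real (amp n t) * S ((G ^^ n) t - t)" for t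
    unfolding v_def using u_formula[of n t] unfolding S_cnj by simp
  obtain m where m: "n = Suc m" using n by (cases n) auto
  have A1: "1 < (2::real)^n" by (rule one_less_power) (use n in auto)
  have "\<exists>\<theta>. lift_on v \<theta> 0 1 \<and> \<theta> 1 - \<theta> 0 = Arg (v 1) - Arg (v 0) + 2 * pi * (\<Sum>p\<in>P. \<epsilon> p)"
  proof (rule glue_pieces[OF finP])
    show "\<forall>p\<in>P. 0 < fst p \<and> fst p < snd p \<and> snd p < 1"
      using JPb unfolding P_def SP_def by fastforce
    show "\<forall>p\<in>P. \<forall>q\<in>P. p \<noteq> q \<longrightarrow> snd p < fst q \<or> snd q < fst p"
    proof (intro ballI impI)
      fix p q assume p: "p \<in> P" and q: "q \<in> P" and pq: "p \<noteq> q"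
      show "snd p < fst q \<or> snd q < fst p"
      proof (cases "p \<in> JP \<and> q \<in> JP")
        case True
        then obtain w w' where w: "w \<in> Wset n" "p = (Jl n w, Jr n w)" and w': "w' \<in> Wset n" "q = (Jl n w', Jr n w')"
          unfolding JP_def by auto
        then have "w \<noteq> w'" using pq by auto
        then have "w + 1 \<le> w' \<or> w' + 1 \<le> w" by auto
        then show ?thesis
        proof
          assume "w + 1 \<le> w'"
          then have "real w + 3/4 < real w' + 1/4" by linarith
          then have "Jr n w < Jl n w'" unfolding Jl_def Jr_def by (simp add: divide_strict_right_mono)
          then show ?thesis using w w' by simp
        next
          assume "w' + 1 \<le> w"
          then have "real w' + 3/4 < real w + 1/4" by linarith
          then have "Jr n w' < Jl n w" unfolding Jl_def Jr_def by (simp add: divide_strict_right_mono)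
          then show ?thesis using w w' by simp
        qed
      next
        case False
        then show ?thesis using p q pq JPb unfolding P_def SP_def by fastforce
      qed
    qed
    show "continuous_on {0..1} v" by (rule contv)
    show "\<forall>t\<in>{0..1}. (\<forall>p\<in>P. t \<notin> {fst p..snd p}) \<longrightarrow> v t \<notin> \<real>\<^sub>\<le>\<^sub>0"
    proof (intro ballI impI)
      fix t :: real assume t: "t \<in> {0..1}" and np: "\<forall>p\<in>P. t \<notin> {fst p..snd p}"
      show "v t \<notin> \<real>\<^sub>\<le>\<^sub>0"
      proof
        assume "v t \<in> \<real>\<^sub>\<le>\<^sub>0"
        then have "Im (v t) = 0" "Re (v t) \<le> 0" by (auto simp: complex_nonpos_Reals_iff)
        then have "Im ((FF ^^ n) (S t) * cnj (S t)) = 0" "1 \<le> Re ((FF ^^ n) (S t) * cnj (S t))"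
          unfolding v_def S_cnj by simp_all
        from bad_points[OF n t this]
        have "t \<in> {1/12..1/6} \<or> t \<in> {5/6..11/12} \<or> (\<exists>w\<in>Wset n. t \<in> {Jl n w..Jr n w})" .
        then show False using np unfolding P_def SP_def JP_def by auto
      qed
    qed
    have allp: "\<forall>p\<in>P. v (fst p) \<notin> \<real>\<^sub>\<le>\<^sub>0 \<and> v (snd p) \<notin> \<real>\<^sub>\<le>\<^sub>0 \<and>
       (\<exists>\<psi>. lift_on v \<psi> (fst p) (snd p) \<and> \<psi> (snd p) - \<psi> (fst p) = Arg (v (snd p)) - Arg (v (fst p)) + 2 * pi * \<epsilon> p)"
    proof
      fix p assume p: "p \<in> P"
      show "v (fst p) \<notin> \<real>\<^sub>\<le>\<^sub>0 \<and> v (snd p) \<notin> \<real>\<^sub>\<le>\<^sub>0 \<and>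
       (\<exists>\<psi>. lift_on v \<psi> (fst p) (snd p) \<and> \<psi> (snd p) - \<psi> (fst p) = Arg (v (snd p)) - Arg (v (fst p)) + 2 * pi * \<epsilon> p)"
      proof (cases "p \<in> JP")
        case True
        then obtain w where w: "w \<in> Wset n" "p = (Jl n w, Jr n w)" unfolding JP_def by auto
        define \<phi> where "\<phi> t = 2 * pi * ((4^n - 1) * t - real w)" for t
        have eps: "\<epsilon> p = 1" unfolding \<epsilon>_def using True by simp
        have vf: "v t = 1 - complex_of_real (2^n) * cis (\<phi> t)" if "t \<in> {Jl n w..Jr n w}" for t
        proof -
          have h: "amp n t = 2^n \<and> (G ^^ n) t = 4^n * t" using J_in[OF w(1) that] horseshoe by blast
          have "S (4^n * t - t) = S ((4^n - 1) * t - real w)"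
            using S_int[of "real w" "(4^n - 1) * t - real w"] by (simp add: algebra_simps)
          then show ?thesis unfolding vform h[THEN conjunct1] h[THEN conjunct2] \<phi>_def S_def by simp
        qed
        have jb: "5/16 \<le> Jl n w" "Jl n w < Jr n w" "Jr n w \<le> 11/16" using J_bounds[OF n w(1)] by auto
        have p4: "(4::real)^n > 0" by simp
        have fa: "\<phi> (Jl n w) = 2 * pi * (1/4 - Jl n w)"
          unfolding \<phi>_def Jl_def using p4 by (simp add: field_simps)
        have fb: "\<phi> (Jr n w) = 2 * pi * (3/4 - Jr n w)"
          unfolding \<phi>_def Jr_def using p4 by (simp add: field_simps)
        have ra: "-pi < \<phi> (Jl n w)" "\<phi> (Jl n w) < 0" unfolding fa using jb pi_gt_zero by (auto simp: algebra_simps)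
        have rb: "0 < \<phi> (Jr n w)" "\<phi> (Jr n w) < pi" unfolding fb using jb pi_gt_zero by (auto simp: algebra_simps)
        have "continuous_on {Jl n w..Jr n w} \<phi>" unfolding \<phi>_def by (intro continuous_intros)
        from piece_lift[OF A1 _ this vf, of 1] ra rb jb
        show ?thesis unfolding w(2) using eps w(2) by simp
      next
        case False
        then have pS: "p \<in> SP" using p unfolding P_def by simp
        have eps: "\<epsilon> p = -1" unfolding \<epsilon>_def using False by simp
        have cf: "continuous_on A (\<lambda>t. 2 * pi * (c - t))" for A :: "real set" and c :: real by (intro continuous_intros)
        show ?thesis
        proof (cases "p = (1/12, 1/6)")
          case True
          have vf: "v t = 1 - complex_of_real (2^n) * cis (2 * pi * (1/8 - t))" if "t \<in> {1/12..1/6}" for t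
          proof -
            have h: "amp n t = 2^n \<and> (G ^^ n) t = 1/8" unfolding m
              using sink1_orbit[OF sig1_piece] that by auto
            show ?thesis unfolding vform h[THEN conjunct1] h[THEN conjunct2] S_def by simp
          qed
          have ra: "0 < 2 * pi * (1/8 - 1/12)" "2 * pi * (1/8 - 1/12) < pi" using pi_gt_zero by (simp_all add: field_simps)
          have rb: "-pi < 2 * pi * (1/8 - 1/6)" "2 * pi * (1/8 - 1/6) < 0" "2 * pi * (1/8 - 1/6) < pi" "-pi < 2 * pi * (1/8 - 1/12)" using pi_gt_zero by (simp_all add: field_simps)
          have PL: "v (1/12) \<notin> \<real>\<^sub>\<le>\<^sub>0 \<and> v (1/6) \<notin> \<real>\<^sub>\<le>\<^sub>0 \<and>
            (\<exists>\<psi>. lift_on v \<psi> (1/12) (1/6) \<and> \<psi> (1/6) - \<psi> (1/12) = Arg (v (1/6)) - Arg (v (1/12)) + 2 * pi * real_of_int (-1))"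
            by (rule piece_lift[OF A1 _ cf vf]) (insert pi_gt_zero, simp_all add: field_simps)
          show ?thesis using PL True eps by simp
        next
          case False
          then have pp: "p = (5/6, 11/12)" using pS unfolding SP_def by simp
          have vf: "v t = 1 - complex_of_real (2^n) * cis (2 * pi * (7/8 - t))" if "t \<in> {5/6..11/12}" for t
          proof -
            have h: "amp n t = 2^n \<and> (G ^^ n) t = -1/8" unfolding m
              using sink2_orbit[OF sig2_piece] that by auto
            have e: "S (-1/8 - t) = S (7/8 - t)" using S_int[of 1 "-1/8 - t"] by simp
            show ?thesis unfolding vform h[THEN conjunct1] h[THEN conjunct2] e by (simp add: S_def)
          qed
          have ra: "0 < 2 * pi * (7/8 - 5/6)" "2 * pi * (7/8 - 5/6) < pi" using pi_gt_zero by (simp_all add: field_simps)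
          have rb: "-pi < 2 * pi * (7/8 - 11/12)" "2 * pi * (7/8 - 11/12) < 0" "2 * pi * (7/8 - 11/12) < pi" "-pi < 2 * pi * (7/8 - 5/6)" using pi_gt_zero by (simp_all add: field_simps)
          have PL: "v (5/6) \<notin> \<real>\<^sub>\<le>\<^sub>0 \<and> v (11/12) \<notin> \<real>\<^sub>\<le>\<^sub>0 \<and>
            (\<exists>\<psi>. lift_on v \<psi> (5/6) (11/12) \<and> \<psi> (11/12) - \<psi> (5/6) = Arg (v (11/12)) - Arg (v (5/6)) + 2 * pi * real_of_int (-1))"
            by (rule piece_lift[OF A1 _ cf vf]) (insert pi_gt_zero, simp_all add: field_simps)
          show ?thesis using PL pp eps by simp
        qed
      qed
    qed
    show "\<forall>p\<in>P. v (fst p) \<notin> \<real>\<^sub>\<le>\<^sub>0 \<and> v (snd p) \<notin> \<real>\<^sub>\<le>\<^sub>0" using allp by blast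
    from allp show "\<forall>p\<in>P. \<exists>\<psi>. lift_on v \<psi> (fst p) (snd p) \<and>
            \<psi> (snd p) - \<psi> (fst p) = Arg (v (snd p)) - Arg (v (fst p)) + 2 * pi * \<epsilon> p" by blast
  qed simp
  then obtain \<theta> where l: "lift_on v \<theta> 0 1" and e: "\<theta> 1 - \<theta> 0 = Arg (v 1) - Arg (v 0) + 2 * pi * (\<Sum>p\<in>P. \<epsilon> p)"
    by blast
  have v01: "v 1 = v 0" unfolding v_def using S_int[of 1 0] S_int[of 1 "-1"] by simp
  have e2: "\<theta> 1 - \<theta> 0 = 2 * pi * (2^n - 2)" using e v01 sumP by simp
  define L where "L t = (0 + complex_of_real r * cis (2 * pi * t)) - (FF ^^ n) (0 + complex_of_real r * cis (2 * pi * t))" for t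
  have Lv: "L t = complex_of_real r * S t * v t" for t
  proof -
    have "(FF ^^ n) (complex_of_real r * S t) = complex_of_real r * (FF ^^ n) (S t)"
      using FFn_S[of r n t] FFn_S1[of n t] r by simp
    moreover have "S t * S (- t) = 1" unfolding S_mult by (simp add: S_def)
    ultimately show ?thesis unfolding L_def v_def S_def[symmetric]
      by (simp add: algebra_simps)
  qed
  have vnz: "v t \<noteq> 0" for t unfolding v_def using u_not_one[OF n, of t] by simp
  define \<theta>L where "\<theta>L t = 2 * pi * t + \<theta> t" for t
  have lL: "lift_on L \<theta>L 0 1"
    unfolding lift_on_def
  proof (intro conjI ballI)
    show "continuous_on {0..1} \<theta>L" unfolding \<theta>L_def using l unfolding lift_on_def by (intro continuous_intros) auto
    fix t :: real assume t: "t \<in> {0..1}"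
    have vt: "v t = complex_of_real (cmod (v t)) * cis (\<theta> t)" using l t unfolding lift_on_def by auto
    have cL: "cmod (L t) = r * cmod (v t)" unfolding Lv using r by (simp add: norm_mult)
    have "complex_of_real (cmod (L t)) * cis (\<theta>L t) = complex_of_real r * S t * (complex_of_real (cmod (v t)) * cis (\<theta> t))"
      unfolding cL \<theta>L_def S_def by (simp add: cis_mult[symmetric] algebra_simps)
    also have "\<dots> = L t" using vt Lv by simp
    finally show "L t = complex_of_real (cmod (L t)) * cis (\<theta>L t)" by simp
  qed
  have Lnz: "L t \<noteq> 0" for t unfolding Lv using r vnz by simp
  have "\<theta>L 1 - \<theta>L 0 = 2 * pi * real_of_int (2^n - 1)" unfolding \<theta>L_def using e2 by (simp add: algebra_simps)
  then have "loop_winding L = 2^n - 1" by (rule loop_winding_eqI[OF lL Lnz])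
  then show ?thesis unfolding L_def .
qed

lemma fpi: assumes n: "1 \<le> n" shows "fixed_point_index (FF ^^ n) 0 = 2^n - 1"
  unfolding fixed_point_index_def
proof (rule the_equality)
  show "\<exists>\<epsilon>>0. \<forall>r. 0 < r \<and> r < \<epsilon> \<longrightarrow> loop_winding (\<lambda>t. (0 + complex_of_real r * cis (2 * pi * t)) - (FF ^^ n) (0 + complex_of_real r * cis (2 * pi * t))) = 2^n - 1"
    using index_lemma[OF n] by (intro exI[of _ 1]) auto
  fix k assume "\<exists>\<epsilon>>0. \<forall>r. 0 < r \<and> r < \<epsilon> \<longrightarrow> loop_winding (\<lambda>t. (0 + complex_of_real r * cis (2 * pi * t)) - (FF ^^ n) (0 + complex_of_real r * cis (2 * pi * t))) = k"
  then obtain \<epsilon> where e: "\<epsilon> > 0" and h: "\<forall>r. 0 < r \<and> r < \<epsilon> \<longrightarrow> loop_winding (\<lambda>t. (0 + complex_of_real r * cis (2 * pi * t)) - (FF ^^ n) (0 + complex_of_real r * cis (2 * pi * t))) = k" by blast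
  have "0 < \<epsilon>/2" "\<epsilon>/2 < \<epsilon>" using e by auto
  then have "loop_winding (\<lambda>t. (0 + complex_of_real (\<epsilon>/2) * cis (2 * pi * t)) - (FF ^^ n) (0 + complex_of_real (\<epsilon>/2) * cis (2 * pi * t))) = k"
    using h by blast
  then show "k = 2^n - 1" using index_lemma[OF n \<open>0 < \<epsilon>/2\<close>] by simp
qed

theorem mainTheorem9:
  shows "\<exists>(f::complex \<Rightarrow> complex) p.
    continuous_on UNIV f \<and> f p = p \<and>
    (\<exists>U. open U \<and> p \<in> U \<and> (\<forall>x\<in>U. periodic_point f x \<longrightarrow> x = p)) \<and>
    \<not> isolated_invariant_set f {p} \<and>
    (\<forall>n::nat. n \<ge> 1 \<longrightarrow> fixed_point_index (f ^^ n) p = 2 ^ n - 1)"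
proof -
  have "\<exists>U. open U \<and> (0::complex) \<in> U \<and> (\<forall>x\<in>U. periodic_point FF x \<longrightarrow> x = 0)"
    using no_periodic by (intro exI[of _ UNIV]) auto
  moreover have "\<forall>n::nat. n \<ge> 1 \<longrightarrow> fixed_point_index (FF ^^ n) 0 = 2 ^ n - 1" using fpi by blast
  ultimately show ?thesis using continuous_FF not_isolated FF_zero
    by (intro exI[of _ FF] exI[of _ 0]) blast
qed


end
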